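(* Let $W=I_2(5)$. Then $$\kappa^{(3)}_{\beta,\alpha}=S^{(0,3)}_\beta(y_\alpha y_\beta)-y_\alpha\,s_\beta s_\alpha s_\beta(y_\alpha),$$ $$\kappa^{(2)}_{\alpha,\beta}=-y_\beta\big\{s_\alpha(y_\alpha y_\beta)+s_\alpha s_\beta(y_\alpha y_\beta)-s_\beta s_\alpha(y_\alpha y_\beta)-s_\beta s_\alpha s_\beta(y_\alpha y_\beta)+y_\alpha s_\beta s_\alpha s_\beta(y_\alpha)-s_\alpha s_\beta(y_\alpha)\,s_\alpha s_\beta s_\alpha(y_\beta)\big\},$$ $$\begin{aligned}\kappa^{(1)}_{\beta,\alpha}=&-s_\beta(y_\alpha y_\beta)\,s_\beta s_\alpha s_\beta(y_\alpha)\big\{s_\beta s_\alpha s_\beta(y_\beta)-y_\alpha\big\}-y_\alpha y_\beta\,s_\alpha s_\beta(y_\alpha)\big\{s_\alpha s_\beta(y_\beta)-s_\alpha s_\beta s_\alpha(y_\beta)\big\}\\&-y_\alpha\,s_\beta(y_\alpha)\,s_\beta s_\alpha(y_\beta)\,s_\beta s_\alpha s_\beta(y_\alpha).\end{aligned}$$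
   Context: General setup: $W$ a finite real reflection group with root system $\Sigma$; $R$ an integral domain containing the ring $\mathcal{R}\subset\mathbb{R}$ generated by the coefficients of roots in the basis of simple roots; $F$ a one-dimensional commutative formal group law over $R$; $\mathcal{S}$ the formal root algebra (the quotient of the completed polynomial ring $R[[x_\lambda:\lambda\in\Lambda]]$, $\Lambda$ the lattice spanned by $\mathcal{R}$-multiples of roots, by the closed ideal generated by $x_0$ and the relations $x_{e_i\gamma+e_j\gamma'}=(e_ix_\gamma)+_F(e_jx_{\gamma'})$ for roots $\gamma,\gamma'$ and a fixed $\mathbb{Z}$-basis $(e_1=1,\dots,e_l)$ of $\mathcal{R}$), with $W$ acting by $w(x_\lambda)=x_{w(\lambda)}$; $\mathcal{Q}$ its localization at all $x_\gamma$; $\mathcal{Q}_W=\mathcal{Q}\otimes_RR[W]$ with left $\mathcal{Q}$-basis $\{\delta_w\}$ and product $(q\delta_w)(q'\delta_{w'})=q\,w(q')\delta_{ww'}$, $\mathbf 1=\delta_1$; $\delta_\gamma=\delta_{s_\gamma}$, $X_\gamma=\frac1{x_\gamma}(\mathbf 1-\delta_\gamma)$. Dihedral notation: $W=I_2(m)$ (here $m=5$), simple roots $\alpha,\beta$; $y_\gamma=1/x_\gamma\in\mathcal{Q}$; $W$ acts on products multiplicatively, $s(y_\gamma)=y_{s(\gamma)}$. $X^{(i)}_{\alpha\ldots}=X_\alpha X_\beta X_\alpha\cdots$ and $X^{(i)}_{\beta\ldots}$ ($i$ alternating factors); $s^{(i)}_{\beta\ldots}=s_\beta s_\alpha\cdots$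 ($i$ factors, identity for $i=0$); $S^{(0,3)}_\beta(u)=\sum_{k=0}^3s^{(k)}_{\beta\ldots}(u)$. The elements $\kappa^{(i)}_{\alpha,\beta},\kappa^{(i)}_{\beta,\alpha}\in\mathcal{Q}$ ($1\le i\le m-2$) are the unique elements with $X^{(m)}_{\alpha\ldots}-X^{(m)}_{\beta\ldots}=\sum_{i=1}^{m-2}\big(\kappa^{(i)}_{\alpha,\beta}X^{(i)}_{\alpha\ldots}-\kappa^{(i)}_{\beta,\alpha}X^{(i)}_{\beta\ldots}\big)$ (uniqueness holds because the elements $X_{I_w}$, one reduced sequence $I_w$ per $w\in W$, are linearly independent over $\mathcal{Q}$). *)

theory Defs
  imports Main
begin

text \<open>For W = I_2(5) with simple roots alpha, beta (angle 4 pi/5), the coefficients of the roots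
 in the basis of simple roots are 0, 1, phi with phi = 2 cos(pi/5) = (1 + sqrt 5)/2, so the ring
 generated by them is Z[phi].  An element (a,b) of type zphi stands for a + b*phi
 (phi^2 = phi + 1); its Z-basis is e_1 = 1, e_2 = phi.  Lambda, the lattice spanned by
 Z[phi]-multiples of roots, is Z[phi] alpha + Z[phi] beta; an element ((a,b),(c,d)) of type lat
 stands for (a + b phi) alpha + (c + d phi) beta.\<close>

type_synonym zphi = "int \<times> int"
type_synonym lat = "zphi \<times> zphi"

definition zp_add :: "zphi \<Rightarrow> zphi \<Rightarrow> zphi" where
  "zp_add x y = (fst x + fst y, snd x + snd y)"
definition zp_neg :: "zphi \<Rightarrow> zphi" where
  "zp_neg x = (- fst x, - snd x)"
definition zp_mul :: "zphi \<Rightarrow> zphi \<Rightarrow> zphi" where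
  "zp_mul x y = (fst x * fst y + snd x * snd y, fst x * snd y + snd x * fst y + snd x * snd y)"

definition e1 :: zphi where "e1 = (1, 0)"
definition e2 :: zphi where "e2 = (0, 1)"

definition zp_emb :: "'a::comm_ring_1 \<Rightarrow> zphi \<Rightarrow> 'a" where
  "zp_emb ph x = of_int (fst x) + of_int (snd x) * ph"

definition lat_add :: "lat \<Rightarrow> lat \<Rightarrow> lat" where
  "lat_add l m = (zp_add (fst l) (fst m), zp_add (snd l) (snd m))"
definition lat_smul :: "zphi \<Rightarrow> lat \<Rightarrow> lat" where
  "lat_smul c l = (zp_mul c (fst l), zp_mul c (snd l))"
definition lat_zero :: lat where "lat_zero = ((0,0),(0,0))"

definition alpha :: lat where "alpha = ((1,0),(0,0))"
definition beta :: lat where "beta = ((0,0),(1,0))"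

text \<open>simple reflections: s_alpha(beta) = beta + phi alpha, s_beta(alpha) = alpha + phi beta
 (Cartan integers -phi), extended Z[phi]-linearly to Lambda\<close>
definition s_alpha :: "lat \<Rightarrow> lat" where
  "s_alpha l = (zp_add (zp_neg (fst l)) (zp_mul (0,1) (snd l)), snd l)"
definition s_beta :: "lat \<Rightarrow> lat" where
  "s_beta l = (fst l, zp_add (zp_mul (0,1) (fst l)) (zp_neg (snd l)))"

fun alt :: "(lat \<Rightarrow> lat) \<Rightarrow> (lat \<Rightarrow> lat) \<Rightarrow> nat \<Rightarrow> (lat \<Rightarrow> lat)" where
  "alt a b 0 = id"
| "alt a b (Suc k) = a \<circ> alt b a k"

text \<open>the elements of W = I_2(5), listed once each by reduced words\<close>
definition Wlist :: "(lat \<Rightarrow> lat) list" where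
  "Wlist = map (alt s_alpha s_beta) [0..<6] @ map (alt s_beta s_alpha) [1..<5]"

definition Wgrp :: "(lat \<Rightarrow> lat) set" where "Wgrp = set Wlist"

definition roots :: "lat set" where
  "roots = (\<lambda>w. w alpha) ` Wgrp \<union> (\<lambda>w. w beta) ` Wgrp"

text \<open>A one-dimensional commutative formal group law F(u,v) = sum a_ij u^i v^j over R, given by
 its coefficients.\<close>

definition biv_one :: "nat \<Rightarrow> nat \<Rightarrow> 'a::comm_ring_1" where
  "biv_one i j = (if i = 0 \<and> j = 0 then 1 else 0)"
definition biv_mul :: "(nat \<Rightarrow> nat \<Rightarrow> 'a::comm_ring_1) \<Rightarrow> (nat \<Rightarrow> nat \<Rightarrow> 'a) \<Rightarrow> nat \<Rightarrow> nat \<Rightarrow> 'a" where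
  "biv_mul p q i j = (\<Sum>i1\<le>i. \<Sum>j1\<le>j. p i1 j1 * q (i - i1) (j - j1))"
fun biv_pow :: "(nat \<Rightarrow> nat \<Rightarrow> 'a::comm_ring_1) \<Rightarrow> nat \<Rightarrow> nat \<Rightarrow> nat \<Rightarrow> 'a" where
  "biv_pow p 0 = biv_one"
| "biv_pow p (Suc k) = biv_mul p (biv_pow p k)"

definition fgl :: "(nat \<Rightarrow> nat \<Rightarrow> 'a::comm_ring_1) \<Rightarrow> bool" where
  "fgl F \<longleftrightarrow>
     (\<forall>i. F i 0 = (if i = 1 then 1 else 0)) \<and>
     (\<forall>j. F 0 j = (if j = 1 then 1 else 0)) \<and>
     (\<forall>i j. F i j = F j i) \<and>
     \<comment> \<open>F(F(u,v),w) = F(u,F(v,w)), compared coefficientwise at u^i v^j w^n\<close>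
     (\<forall>i j n. (\<Sum>k\<le>i+j. F k n * biv_pow F k i j) = (\<Sum>l\<le>j+n. F i l * biv_pow F l j n))"

section \<open>The completed polynomial ring R[[x_lambda : lambda in Lambda]]\<close>

type_synonym mono = "lat \<Rightarrow> nat"
type_synonym 'a ser = "mono \<Rightarrow> 'a"

definition msupp :: "mono \<Rightarrow> lat set" where "msupp m = {l. m l \<noteq> 0}"
definition deg :: "mono \<Rightarrow> nat" where "deg m = sum m (msupp m)"

text \<open>elements of the completion of R[x_Lambda] at the augmentation ideal: formal sums of
 monomials with only finitely many monomials of each degree\<close>
definition cps :: "'a::comm_ring_1 ser \<Rightarrow> bool" where
  "cps f \<longleftrightarrow> (\<forall>m. f m \<noteq> 0 \<longrightarrow> finite (msupp m)) \<and> (\<forall>d. finite {m. f m \<noteq> 0 \<and> deg m = d})"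

definition ser_zero :: "'a::comm_ring_1 ser" where "ser_zero = (\<lambda>m. 0)"
definition ser_one :: "'a::comm_ring_1 ser" where "ser_one = (\<lambda>m. if m = (\<lambda>l. 0) then 1 else 0)"
definition ser_add :: "'a::comm_ring_1 ser \<Rightarrow> 'a ser \<Rightarrow> 'a ser" where
  "ser_add f g = (\<lambda>m. f m + g m)"
definition ser_neg :: "'a::comm_ring_1 ser \<Rightarrow> 'a ser" where
  "ser_neg f = (\<lambda>m. - f m)"
definition ser_diff :: "'a::comm_ring_1 ser \<Rightarrow> 'a ser \<Rightarrow> 'a ser" where
  "ser_diff f g = (\<lambda>m. f m - g m)"
definition ser_mul :: "'a::comm_ring_1 ser \<Rightarrow> 'a ser \<Rightarrow> 'a ser" where
  "ser_mul f g = (\<lambda>m. \<Sum>(m1, m2) \<in> {(m1, m2). \<forall>l. m1 l + m2 l = m l}. f m1 * g m2)"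
definition ser_var :: "lat \<Rightarrow> 'a::comm_ring_1 ser" where
  "ser_var l = (\<lambda>m. if m = (\<lambda>k. if k = l then 1 else 0) then 1 else 0)"
definition ser_xmono :: "mono \<Rightarrow> 'a::comm_ring_1 ser \<Rightarrow> 'a ser" where
  "ser_xmono e f = (\<lambda>m. if (\<forall>l. e l \<le> m l) then f (\<lambda>l. m l - e l) else 0)"
text \<open>the W-action w(x_lambda) = x_{w lambda}: the coefficient of x^m in w(f) is that of x^(m o w) in f\<close>
definition ser_act :: "(lat \<Rightarrow> lat) \<Rightarrow> 'a::comm_ring_1 ser \<Rightarrow> 'a ser" where
  "ser_act w f = (\<lambda>m. f (m \<circ> w))"

text \<open>F(c1 x_l, c2 x_k) = sum_{i,j} a_ij c1^i c2^j x_l^i x_k^j\<close>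
definition Fsub :: "(nat \<Rightarrow> nat \<Rightarrow> 'a::comm_ring_1) \<Rightarrow> 'a \<Rightarrow> lat \<Rightarrow> 'a \<Rightarrow> lat \<Rightarrow> 'a ser" where
  "Fsub F c1 l c2 k = (\<lambda>m. \<Sum>(i, j) \<in> {(i, j). i \<le> deg m \<and> j \<le> deg m \<and>
        m = (\<lambda>n. (if n = l then i else 0) + (if n = k then j else 0))}. F i j * c1 ^ i * c2 ^ j)"

text \<open>generators of the defining ideal of the formal root algebra: x_0 and
 x_{e_i g + e_j g'} - ((e_i x_g) +_F (e_j x_g')) for roots g, g' and i, j in {1,2}\<close>
definition root_gens :: "'a::comm_ring_1 \<Rightarrow> (nat \<Rightarrow> nat \<Rightarrow> 'a) \<Rightarrow> 'a ser set" where
  "root_gens ph F = {ser_var lat_zero} \<union>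
     {ser_diff (ser_var (lat_add (lat_smul ei g) (lat_smul ej g')))
               (Fsub F (zp_emb ph ei) g (zp_emb ph ej) g')
      | g g' ei ej. g \<in> roots \<and> g' \<in> roots \<and> ei \<in> {e1, e2} \<and> ej \<in> {e1, e2}}"

inductive_set gen_ideal :: "'a::comm_ring_1 ser set \<Rightarrow> 'a ser set" for G where
  gen_zero: "ser_zero \<in> gen_ideal G"
| gen_step: "g \<in> G \<Longrightarrow> cps c \<Longrightarrow> h \<in> gen_ideal G \<Longrightarrow> ser_add (ser_mul c g) h \<in> gen_ideal G"

text \<open>closure in the adic topology of the completed ring (basis of neighbourhoods of 0:
 series vanishing in degrees < n)\<close>
definition closed_ideal :: "'a::comm_ring_1 ser set \<Rightarrow> 'a ser set" where
  "closed_ideal G = {f. cps f \<and> (\<forall>n. \<exists>j \<in> gen_ideal G. \<forall>m. deg m < n \<longrightarrow> f m = j m)}"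

text \<open>the formal root algebra S = R[[x_Lambda]] / Jbar\<close>
definition Jbar :: "'a::comm_ring_1 \<Rightarrow> (nat \<Rightarrow> nat \<Rightarrow> 'a) \<Rightarrow> 'a ser set" where
  "Jbar ph F = closed_ideal (root_gens ph F)"

section \<open>Q = S localized at all x_gamma (gamma a root), via representatives\<close>

text \<open>a representative (f, e) stands for f / prod_gamma x_gamma^(e gamma)\<close>
type_synonym 'a qrep = "'a ser \<times> mono"

definition qrep_ok :: "'a::comm_ring_1 qrep \<Rightarrow> bool" where
  "qrep_ok q \<longleftrightarrow> cps (fst q) \<and> msupp (snd q) \<subseteq> roots"

definition qeq :: "'a::comm_ring_1 \<Rightarrow> (nat \<Rightarrow> nat \<Rightarrow> 'a) \<Rightarrow> 'a qrep \<Rightarrow> 'a qrep \<Rightarrow> bool" where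
  "qeq ph F p q \<longleftrightarrow> (\<exists>u. msupp u \<subseteq> roots \<and>
      ser_xmono u (ser_diff (ser_xmono (snd q) (fst p)) (ser_xmono (snd p) (fst q))) \<in> Jbar ph F)"

definition qzero :: "'a::comm_ring_1 qrep" where "qzero = (ser_zero, (\<lambda>l. 0))"
definition qone :: "'a::comm_ring_1 qrep" where "qone = (ser_one, (\<lambda>l. 0))"
definition qadd :: "'a::comm_ring_1 qrep \<Rightarrow> 'a qrep \<Rightarrow> 'a qrep" where
  "qadd p q = (ser_add (ser_xmono (snd q) (fst p)) (ser_xmono (snd p) (fst q)), (\<lambda>l. snd p l + snd q l))"
definition qneg :: "'a::comm_ring_1 qrep \<Rightarrow> 'a qrep" where
  "qneg p = (ser_neg (fst p), snd p)"
definition qsub :: "'a::comm_ring_1 qrep \<Rightarrow> 'a qrep \<Rightarrow> 'a qrep" where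
  "qsub p q = qadd p (qneg q)"
definition qmul :: "'a::comm_ring_1 qrep \<Rightarrow> 'a qrep \<Rightarrow> 'a qrep" where
  "qmul p q = (ser_mul (fst p) (fst q), (\<lambda>l. snd p l + snd q l))"
definition qsum :: "'a::comm_ring_1 qrep list \<Rightarrow> 'a qrep" where
  "qsum xs = foldr qadd xs qzero"
text \<open>y_gamma = 1 / x_gamma\<close>
definition qy :: "lat \<Rightarrow> 'a::comm_ring_1 qrep" where
  "qy g = (ser_one, (\<lambda>l. if l = g then 1 else 0))"
definition qact :: "(lat \<Rightarrow> lat) \<Rightarrow> 'a::comm_ring_1 qrep \<Rightarrow> 'a qrep" where
  "qact w p = (ser_act w (fst p), snd p \<circ> inv w)"

section \<open>The twisted group algebra Q_W = Q (x) R[W], elements sum_w q_w delta_w\<close>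

type_synonym 'a qw = "(lat \<Rightarrow> lat) \<Rightarrow> 'a qrep"

definition qw_eq :: "'a::comm_ring_1 \<Rightarrow> (nat \<Rightarrow> nat \<Rightarrow> 'a) \<Rightarrow> 'a qw \<Rightarrow> 'a qw \<Rightarrow> bool" where
  "qw_eq ph F P P' \<longleftrightarrow> (\<forall>w \<in> Wgrp. qeq ph F (P w) (P' w))"
definition qw_zero :: "'a::comm_ring_1 qw" where "qw_zero = (\<lambda>w. qzero)"
definition qw_add :: "'a::comm_ring_1 qw \<Rightarrow> 'a qw \<Rightarrow> 'a qw" where
  "qw_add P P' = (\<lambda>w. qadd (P w) (P' w))"
definition qw_sub :: "'a::comm_ring_1 qw \<Rightarrow> 'a qw \<Rightarrow> 'a qw" where
  "qw_sub P P' = (\<lambda>w. qsub (P w) (P' w))"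
definition qw_smul :: "'a::comm_ring_1 qrep \<Rightarrow> 'a qw \<Rightarrow> 'a qw" where
  "qw_smul q P = (\<lambda>w. qmul q (P w))"
definition qw_sum :: "'a::comm_ring_1 qw list \<Rightarrow> 'a qw" where
  "qw_sum xs = foldr qw_add xs qw_zero"
text \<open>(q delta_w)(q' delta_w') = q w(q') delta_{ww'}\<close>
definition qw_mul :: "'a::comm_ring_1 qw \<Rightarrow> 'a qw \<Rightarrow> 'a qw" where
  "qw_mul P P' = (\<lambda>u. qsum (map (\<lambda>w. qmul (P w) (qact w (P' (inv w \<circ> u)))) Wlist))"
definition qw_delta :: "(lat \<Rightarrow> lat) \<Rightarrow> 'a::comm_ring_1 qw" where
  "qw_delta w = (\<lambda>v. if v = w then qone else qzero)"
definition qw_X :: "lat \<Rightarrow> (lat \<Rightarrow> lat) \<Rightarrow> 'a::comm_ring_1 qw" where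
  "qw_X g s = qw_smul (qy g) (qw_sub (qw_delta id) (qw_delta s))"

definition X_alpha :: "'a::comm_ring_1 qw" where "X_alpha = qw_X alpha s_alpha"
definition X_beta :: "'a::comm_ring_1 qw" where "X_beta = qw_X beta s_beta"

text \<open>Xalt A B i = A B A ... (i factors); X^{(i)}_{alpha...} = Xalt X_alpha X_beta i\<close>
fun Xalt :: "'a::comm_ring_1 qw \<Rightarrow> 'a qw \<Rightarrow> nat \<Rightarrow> 'a qw" where
  "Xalt A B 0 = qw_delta id"
| "Xalt A B (Suc i) = qw_mul A (Xalt B A i)"

definition kappa_identity ::
  "'a::comm_ring_1 \<Rightarrow> (nat \<Rightarrow> nat \<Rightarrow> 'a) \<Rightarrow> (nat \<Rightarrow> 'a qrep) \<Rightarrow> (nat \<Rightarrow> 'a qrep) \<Rightarrow> bool" where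
  "kappa_identity ph F kab kba \<longleftrightarrow>
     qw_eq ph F (qw_sub (Xalt X_alpha X_beta 5) (Xalt X_beta X_alpha 5))
       (qw_sum (map (\<lambda>i. qw_sub (qw_smul (kab i) (Xalt X_alpha X_beta i))
                                 (qw_smul (kba i) (Xalt X_beta X_alpha i))) [1..<4]))"

text \<open>s^{(k)}_{beta...} = s_beta s_alpha ... (k factors), s^{(k)}_{alpha...} likewise\<close>
definition sbw :: "nat \<Rightarrow> lat \<Rightarrow> lat" where "sbw k = alt s_beta s_alpha k"
definition saw :: "nat \<Rightarrow> lat \<Rightarrow> lat" where "saw k = alt s_alpha s_beta k"

definition yab :: "'a::comm_ring_1 qrep" where "yab = qmul (qy alpha) (qy beta)"

text \<open>S^{(0,3)}_beta(u) = sum_{k=0}^{3} s^{(k)}_{beta...}(u)\<close>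
definition S03_beta :: "'a::comm_ring_1 qrep \<Rightarrow> 'a qrep" where
  "S03_beta u = qsum (map (\<lambda>k. qact (sbw k) u) [0..<4])"

end

theory Submission
  imports Defs "HOL-Library.FuncSet"
begin


abbreviation fin :: "mono \<Rightarrow> bool" where "fin m \<equiv> finite (msupp m)"
definition Dc :: "mono \<Rightarrow> (mono \<times> mono) set" where
  "Dc m = {(m1, m2). \<forall>l. m1 l + m2 l = m l}"

lemma ser_mul_Dc: "ser_mul f g m = (\<Sum>(m1, m2) \<in> Dc m. f m1 * g m2)"
  unfolding ser_mul_def Dc_def by simp

lemma bounded_funs_finite:
  assumes "fin m" shows "finite {m1::mono. \<forall>l. m1 l \<le> m l}"
proof -
  let ?S = "msupp m"
  have "{m1::mono. \<forall>l. m1 l \<le> m l} \<subseteq> (\<lambda>g l. if l \<in> ?S then g l else 0) ` (PiE ?S (\<lambda>l. {0..m l}))"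
  proof
    fix m1 :: mono assume h: "m1 \<in> {m1. \<forall>l. m1 l \<le> m l}"
    hence h': "\<forall>l. m1 l \<le> m l" by simp
    have "m1 = (\<lambda>l. if l \<in> ?S then restrict m1 ?S l else 0)"
    proof
      fix l show "m1 l = (if l \<in> ?S then restrict m1 ?S l else 0)"
        using h'[rule_format, of l] by (auto simp: msupp_def)
    qed
    moreover have "restrict m1 ?S \<in> PiE ?S (\<lambda>l. {0..m l})" using h' by auto
    ultimately show "m1 \<in> (\<lambda>g l. if l \<in> ?S then g l else 0) ` (PiE ?S (\<lambda>l. {0..m l}))" by blast
  qed
  moreover have "finite (PiE ?S (\<lambda>l. {0..m l}))" using assms by (intro finite_PiE) auto
  ultimately show ?thesis using finite_subset by blast
qed

lemma Dc_finite: assumes "fin m" shows "finite (Dc m)"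
proof -
  have "Dc m \<subseteq> (\<lambda>m1. (m1, \<lambda>l. m l - m1 l)) ` {m1::mono. \<forall>l. m1 l \<le> m l}"
  proof
    fix p assume "p \<in> Dc m"
    then obtain a b where p: "p = (a,b)" and h: "\<forall>l. a l + b l = m l" unfolding Dc_def by auto
    have "b = (\<lambda>l. m l - a l)" using h by (intro ext) (metis add_diff_cancel_left')
    moreover have "\<forall>l. a l \<le> m l" using h by (metis le_add1)
    ultimately show "p \<in> (\<lambda>m1. (m1, \<lambda>l. m l - m1 l)) ` {m1::mono. \<forall>l. m1 l \<le> m l}" using p by auto
  qed
  thus ?thesis using bounded_funs_finite[OF assms] finite_subset by blast
qed

lemma Dc_infinite: assumes "\<not> fin m" shows "infinite (Dc m)"
proof
  assume fD: "finite (Dc m)"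
  let ?f = "\<lambda>l. ((\<lambda>k. if k = l then m l else 0)::mono, (\<lambda>k. if k = l then 0 else m k)::mono)"
  have "inj_on ?f (msupp m)"
  proof (rule inj_onI)
    fix x y assume xs: "x \<in> msupp m" and "y \<in> msupp m" and fe: "?f x = ?f y"
    from fe have e: "(\<lambda>k. if k = x then m x else 0) = (\<lambda>k. (if k = y then m y else 0)::nat)"
      by (rule arg_cong[where f=fst, THEN trans[OF sym[OF fst_conv] trans[OF _ fst_conv]]])
    from xs have mx: "m x \<noteq> 0" by (simp add: msupp_def)
    have "(if x = x then m x else 0) = (if x = y then m y else (0::nat))" using fun_cong[OF e, of x] by simp
    thus "x = y" using mx by (auto split: if_splits)
  qed
  moreover have "?f ` msupp m \<subseteq> Dc m" by (auto simp: Dc_def)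
  ultimately have "finite (?f ` msupp m)" using fD finite_subset by blast
  hence "finite (msupp m)" using \<open>inj_on ?f (msupp m)\<close> finite_imageD by blast
  thus False using assms by simp
qed

lemma ser_mul_nonfin: "\<not> fin m \<Longrightarrow> ser_mul f g m = 0"
  unfolding ser_mul_Dc using Dc_infinite by simp

lemma msupp_add: "msupp (\<lambda>l. (a::mono) l + b l) = msupp a \<union> msupp b"
  by (auto simp: msupp_def)

lemma Dc_fin: "(a,b) \<in> Dc m \<Longrightarrow> fin m \<Longrightarrow> fin a \<and> fin b"
proof -
  assume "(a,b) \<in> Dc m" "fin m"
  hence "m = (\<lambda>l. a l + b l)" by (auto simp: Dc_def)
  thus ?thesis using \<open>fin m\<close> msupp_add by (metis finite_Un)
qed

lemma Dc_nonfin: "(a,b) \<in> Dc m \<Longrightarrow> \<not> fin m \<Longrightarrow> \<not> fin a \<or> \<not> fin b"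
proof -
  assume "(a,b) \<in> Dc m" "\<not>fin m"
  hence "m = (\<lambda>l. a l + b l)" by (auto simp: Dc_def)
  thus ?thesis using \<open>\<not>fin m\<close> msupp_add by (metis finite_Un)
qed

lemma deg_eq: "finite S \<Longrightarrow> msupp m \<subseteq> S \<Longrightarrow> deg m = sum m S"
  unfolding deg_def by (rule sum.mono_neutral_left) (auto simp: msupp_def)

lemma deg_nonfin: "\<not> fin m \<Longrightarrow> deg m = 0"
  unfolding deg_def by simp

lemma deg_add: "fin a \<Longrightarrow> fin b \<Longrightarrow> deg (\<lambda>l. a l + b l) = deg a + deg b"
proof -
  assume fa: "fin a" and fb: "fin b"
  let ?S = "msupp a \<union> msupp b"
  have "deg (\<lambda>l. a l + b l) = sum (\<lambda>l. a l + b l) ?S" using fa fb by (intro deg_eq) (auto simp: msupp_def)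
  also have "\<dots> = sum a ?S + sum b ?S" by (simp add: sum.distrib)
  also have "\<dots> = deg a + deg b" using fa fb deg_eq[of ?S a] deg_eq[of ?S b] by simp
  finally show ?thesis .
qed

lemma Dc_deg: "(a,b) \<in> Dc m \<Longrightarrow> fin m \<Longrightarrow> deg m = deg a + deg b"
proof -
  assume h: "(a,b) \<in> Dc m" "fin m"
  hence "m = (\<lambda>l. a l + b l)" by (auto simp: Dc_def)
  thus ?thesis using deg_add Dc_fin[OF h] by metis
qed

lemma cps_zero: "cps (ser_zero :: 'a::comm_ring_1 ser)"
  by (simp add: cps_def ser_zero_def)

lemma cps_one: "cps (ser_one :: 'a::comm_ring_1 ser)"
proof -
  have "{m. ser_one m \<noteq> (0::'a) \<and> deg m = d} \<subseteq> {\<lambda>l. 0}" for d by (auto simp: ser_one_def)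
  hence "finite {m. ser_one m \<noteq> (0::'a) \<and> deg m = d}" for d by (meson finite.emptyI finite_insert finite_subset)
  moreover have "msupp (\<lambda>l. 0) = {}" by (simp add: msupp_def)
  ultimately show ?thesis by (auto simp: cps_def ser_one_def)
qed

lemma cps_add: "cps f \<Longrightarrow> cps g \<Longrightarrow> cps (ser_add f g)"
proof -
  assume f: "cps f" and g: "cps g"
  have "{m. ser_add f g m \<noteq> 0 \<and> deg m = d} \<subseteq> {m. f m \<noteq> 0 \<and> deg m = d} \<union> {m. g m \<noteq> 0 \<and> deg m = d}" for d
    by (auto simp: ser_add_def)
  hence "finite {m. ser_add f g m \<noteq> 0 \<and> deg m = d}" for d using f g unfolding cps_def by (meson finite_UnI finite_subset)
  moreover have "ser_add f g m \<noteq> 0 \<Longrightarrow> fin m" for m using f g unfolding cps_def ser_add_def by force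
  ultimately show ?thesis unfolding cps_def by blast
qed

lemma cps_neg: "cps f \<Longrightarrow> cps (ser_neg f)"
  unfolding cps_def ser_neg_def by simp

lemma cps_diff: "cps f \<Longrightarrow> cps g \<Longrightarrow> cps (ser_diff f g)"
proof -
  assume "cps f" "cps g"
  hence "cps (ser_add f (ser_neg g))" by (simp add: cps_add cps_neg)
  moreover have "ser_add f (ser_neg g) = ser_diff f g" by (simp add: ser_add_def ser_neg_def ser_diff_def)
  ultimately show ?thesis by simp
qed

lemma cps_fin: "cps f \<Longrightarrow> f m \<noteq> 0 \<Longrightarrow> fin m"
  unfolding cps_def by blast

lemma cps_nonfin: "cps f \<Longrightarrow> \<not> fin m \<Longrightarrow> f m = 0"
  unfolding cps_def by blast

lemma deg_le_Dc: "(a,b) \<in> Dc m \<Longrightarrow> fin m \<Longrightarrow> deg a \<le> deg m \<and> deg b \<le> deg m"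
  using Dc_deg by fastforce

lemma cps_mul: "cps f \<Longrightarrow> cps g \<Longrightarrow> cps (ser_mul f g)"
proof -
  assume f: "cps f" and g: "cps g"
  have A: "ser_mul f g m \<noteq> 0 \<Longrightarrow> fin m" for m using ser_mul_nonfin by blast
  have "finite {m. ser_mul f g m \<noteq> 0 \<and> deg m = d}" for d
  proof -
    let ?Fa = "{a. f a \<noteq> 0 \<and> deg a \<le> d}" and ?Gb = "{b. g b \<noteq> 0 \<and> deg b \<le> d}"
    have fF: "finite ?Fa"
    proof -
      have "?Fa = (\<Union>k\<in>{..d}. {a. f a \<noteq> 0 \<and> deg a = k})" by auto
      thus ?thesis using f unfolding cps_def by simp
    qed
    have fG: "finite ?Gb"
    proof -
      have "?Gb = (\<Union>k\<in>{..d}. {a. g a \<noteq> 0 \<and> deg a = k})" by auto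
      thus ?thesis using g unfolding cps_def by simp
    qed
    have "{m. ser_mul f g m \<noteq> 0 \<and> deg m = d} \<subseteq> (\<lambda>(a,b) l. a l + b l) ` (?Fa \<times> ?Gb)"
    proof
      fix m assume "m \<in> {m. ser_mul f g m \<noteq> 0 \<and> deg m = d}"
      hence nz: "ser_mul f g m \<noteq> 0" and dm: "deg m = d" by auto
      have fm: "fin m" using A nz by blast
      obtain p where p: "p \<in> Dc m" "(case p of (m1,m2) \<Rightarrow> f m1 * g m2) \<noteq> 0"
        using nz unfolding ser_mul_Dc by (meson sum.neutral)
      obtain a b where ab: "p = (a,b)" by (cases p)
      have "f a \<noteq> 0" "g b \<noteq> 0" using p ab by auto
      moreover have "deg a \<le> d" "deg b \<le> d" using deg_le_Dc[of a b m] p ab fm dm by auto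
      moreover have "m = (\<lambda>l. a l + b l)" using p ab by (auto simp: Dc_def)
      ultimately show "m \<in> (\<lambda>(a,b) l. a l + b l) ` (?Fa \<times> ?Gb)" by force
    qed
    thus ?thesis using fF fG by (meson finite_SigmaI finite_imageI finite_subset)
  qed
  thus ?thesis using A unfolding cps_def by blast
qed


lemma sum_Dc_split: "(\<Sum>(m1, m2) \<in> A. F m1 m2) = (\<Sum>p\<in>A. F (fst p) (snd p))"
  by (simp add: case_prod_beta)

lemma triple:
  assumes fm: "fin m"
  shows "(\<Sum>p\<in>Dc m. \<Sum>q\<in>Dc (fst p). F (fst q) (snd q) (snd p))
       = (\<Sum>p\<in>Dc m. \<Sum>q\<in>Dc (snd p). F (fst p) (fst q) (snd q))"
proof -
  have fL: "\<forall>p\<in>Dc m. finite (Dc (fst p))" using Dc_fin fm Dc_finite by (metis prod.collapse)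
  have fR: "\<forall>p\<in>Dc m. finite (Dc (snd p))" using Dc_fin fm Dc_finite by (metis prod.collapse)
  have L: "(\<Sum>p\<in>Dc m. \<Sum>q\<in>Dc (fst p). F (fst q) (snd q) (snd p))
       = (\<Sum>z\<in>Sigma (Dc m) (\<lambda>p. Dc (fst p)). F (fst (snd z)) (snd (snd z)) (snd (fst z)))"
    using sum.Sigma[OF Dc_finite[OF fm] fL, of "\<lambda>p q. F (fst q) (snd q) (snd p)"] by (simp add: split_def)
  have R: "(\<Sum>p\<in>Dc m. \<Sum>q\<in>Dc (snd p). F (fst p) (fst q) (snd q))
       = (\<Sum>z\<in>Sigma (Dc m) (\<lambda>p. Dc (snd p)). F (fst (fst z)) (fst (snd z)) (snd (snd z)))"
    using sum.Sigma[OF Dc_finite[OF fm] fR, of "\<lambda>p q. F (fst p) (fst q) (snd q)"] by (simp add: split_def)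
  have "(\<Sum>z\<in>Sigma (Dc m) (\<lambda>p. Dc (fst p)). F (fst (snd z)) (snd (snd z)) (snd (fst z)))
      = (\<Sum>z\<in>Sigma (Dc m) (\<lambda>p. Dc (snd p)). F (fst (fst z)) (fst (snd z)) (snd (snd z)))"
  proof (rule sum.reindex_bij_witness[where
        j = "\<lambda>((x,c),(a,b)). ((a, \<lambda>l. b l + c l), (b, c))"
        and i = "\<lambda>((a,y),(b,c)). ((\<lambda>l. a l + b l, c), (a, b))"])
    fix z assume "z \<in> Sigma (Dc m) (\<lambda>p. Dc (fst p))"
    then obtain x c a b where z: "z = ((x,c),(a,b))" and h1: "\<forall>l. x l + c l = m l" and h2: "\<forall>l. a l + b l = x l"
      by (auto simp: Dc_def)
    have xe: "x = (\<lambda>l. a l + b l)" using h2 by auto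
    show "(\<lambda>((a,y),(b,c)). ((\<lambda>l. a l + b l, c), (a, b))) ((\<lambda>((x,c),(a,b)). ((a, \<lambda>l. b l + c l), (b, c))) z) = z"
      using z xe by simp
    show "(\<lambda>((x,c),(a,b)). ((a, \<lambda>l. b l + c l), (b, c))) z \<in> Sigma (Dc m) (\<lambda>p. Dc (snd p))"
      using z h1 h2 by (auto simp: Dc_def add.assoc[symmetric])
    show "F (fst (fst ((\<lambda>((x,c),(a,b)). ((a, \<lambda>l. b l + c l), (b, c))) z)))
            (fst (snd ((\<lambda>((x,c),(a,b)). ((a, \<lambda>l. b l + c l), (b, c))) z)))
            (snd (snd ((\<lambda>((x,c),(a,b)). ((a, \<lambda>l. b l + c l), (b, c))) z)))
          = F (fst (snd z)) (snd (snd z)) (snd (fst z))" using z by simp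
  next
    fix z assume "z \<in> Sigma (Dc m) (\<lambda>p. Dc (snd p))"
    then obtain a y b c where z: "z = ((a,y),(b,c))" and h1: "\<forall>l. a l + y l = m l" and h2: "\<forall>l. b l + c l = y l"
      by (auto simp: Dc_def)
    have ye: "y = (\<lambda>l. b l + c l)" using h2 by auto
    show "(\<lambda>((x,c),(a,b)). ((a, \<lambda>l. b l + c l), (b, c))) ((\<lambda>((a,y),(b,c)). ((\<lambda>l. a l + b l, c), (a, b))) z) = z"
      using z ye by simp
    show "(\<lambda>((a,y),(b,c)). ((\<lambda>l. a l + b l, c), (a, b))) z \<in> Sigma (Dc m) (\<lambda>p. Dc (fst p))"
      using z h1 h2 by (auto simp: Dc_def add.assoc)
  qed
  thus ?thesis using L R by simp
qed

lemma ser_mul_assoc: "ser_mul (ser_mul f g) h = ser_mul f (ser_mul g (h::'a::comm_ring_1 ser))"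
proof
  fix m
  show "ser_mul (ser_mul f g) h m = ser_mul f (ser_mul g h) m"
  proof (cases "fin m")
    case False thus ?thesis by (simp add: ser_mul_nonfin)
  next
    case True
    have "ser_mul (ser_mul f g) h m = (\<Sum>p\<in>Dc m. \<Sum>q\<in>Dc (fst p). f (fst q) * g (snd q) * h (snd p))"
      by (simp add: ser_mul_Dc sum_Dc_split sum_distrib_right)
    also have "\<dots> = (\<Sum>p\<in>Dc m. \<Sum>q\<in>Dc (snd p). f (fst p) * g (fst q) * h (snd q))"
      using triple[OF True, of "\<lambda>a b c. f a * g b * h c"] by simp
    also have "\<dots> = ser_mul f (ser_mul g h) m"
      by (simp add: ser_mul_Dc sum_Dc_split sum_distrib_left mult.assoc)
    finally show ?thesis .
  qed
qed

lemma ser_mul_comm: "ser_mul f g = ser_mul g (f::'a::comm_ring_1 ser)"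
proof
  fix m
  show "ser_mul f g m = ser_mul g f m"
    unfolding ser_mul_Dc sum_Dc_split
  proof (rule sum.reindex_bij_witness[where i = "\<lambda>(a,b). (b,a)" and j = "\<lambda>(a,b). (b,a)"])
  qed (auto simp: Dc_def add.commute mult.commute)
qed

lemma ser_mul_add: "ser_mul f (ser_add g h) = ser_add (ser_mul f g) (ser_mul f (h::'a::comm_ring_1 ser))"
  by (rule ext) (simp add: ser_mul_def ser_add_def distrib_left sum.distrib case_prod_beta)

lemma ser_mul_neg: "ser_mul f (ser_neg g) = ser_neg (ser_mul f (g::'a::comm_ring_1 ser))"
  by (rule ext) (simp add: ser_mul_def ser_neg_def case_prod_beta sum_negf)

lemma ser_mul_zero: "ser_mul f ser_zero = (ser_zero::'a::comm_ring_1 ser)"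
  by (rule ext) (simp add: ser_mul_def ser_zero_def)

lemma ser_one_mul: assumes "cps g" shows "ser_mul ser_one g = (g::'a::comm_ring_1 ser)"
proof
  fix m
  show "ser_mul ser_one g m = g m"
  proof (cases "fin m")
    case False thus ?thesis using assms by (simp add: ser_mul_nonfin cps_nonfin)
  next
    case True
    have "ser_mul ser_one g m = (\<Sum>p\<in>Dc m. (if fst p = (\<lambda>l. 0) then 1 else 0) * g (snd p))"
      by (simp add: ser_mul_Dc sum_Dc_split ser_one_def)
    also have "\<dots> = (\<Sum>p\<in>{((\<lambda>l. 0)::mono, m)}. (if fst p = (\<lambda>l. 0) then 1 else 0) * g (snd p))"
    proof (rule sum.mono_neutral_right)
      show "finite (Dc m)" using Dc_finite True by blast
      show "{((\<lambda>l. 0)::mono, m)} \<subseteq> Dc m" by (simp add: Dc_def)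
      show "\<forall>p\<in>Dc m - {((\<lambda>l. 0)::mono, m)}. (if fst p = (\<lambda>l. 0) then 1 else 0) * g (snd p) = 0"
      proof
        fix p assume p: "p \<in> Dc m - {((\<lambda>l. 0)::mono, m)}"
        show "(if fst p = (\<lambda>l. 0) then 1 else 0) * g (snd p) = 0"
        proof (cases "fst p = (\<lambda>l. 0)")
          case True
          have "\<forall>l. fst p l + snd p l = m l" using p by (auto simp: Dc_def case_prod_beta)
          hence "snd p = m" using True by auto
          hence "p = ((\<lambda>l. 0)::mono, m)" using True by (metis prod.collapse)
          thus ?thesis using p by simp
        qed simp
      qed
    qed
    also have "\<dots> = g m" by simp
    finally show ?thesis .
  qed
qed

definition mo :: "mono \<Rightarrow> 'a::comm_ring_1 ser" where
  "mo e = (\<lambda>m. if m = e then 1 else 0)"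

lemma cps_mo: assumes "fin e" shows "cps (mo e)"
proof -
  have "{m. mo e m \<noteq> (0::'a) \<and> deg m = d} \<subseteq> {e}" for d by (auto simp: mo_def)
  hence "finite {m. mo e m \<noteq> (0::'a) \<and> deg m = d}" for d by (meson finite.emptyI finite_insert finite_subset)
  thus ?thesis using assms by (auto simp: cps_def mo_def)
qed

lemma ser_xmono_mo: assumes fe: "fin e" and g: "cps g"
  shows "ser_xmono e g = ser_mul (mo e) (g::'a::comm_ring_1 ser)"
proof
  fix m
  show "ser_xmono e g m = ser_mul (mo e) g m"
  proof (cases "fin m")
    case False
    have "ser_xmono e g m = 0"
    proof (cases "\<forall>l::lat. e l \<le> m l")
      case True
      have "m = (\<lambda>l. e l + (m l - e l))" using True by auto
      hence "\<not> fin (\<lambda>l. m l - e l)" using False fe msupp_add by (metis finite_Un)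
      thus ?thesis using True g by (simp add: ser_xmono_def cps_nonfin)
    next
      case False thus ?thesis unfolding ser_xmono_def by meson
    qed
    thus ?thesis using False by (simp add: ser_mul_nonfin)
  next
    case True
    have "ser_mul (mo e) g m = (\<Sum>p\<in>Dc m. (if fst p = e then 1 else 0) * g (snd p))"
      by (simp add: ser_mul_Dc sum_Dc_split mo_def)
    also have "\<dots> = (\<Sum>p\<in>(if (\<forall>l::lat. e l \<le> m l) then {(e, \<lambda>l. m l - e l)} else {}). (if fst p = e then 1 else 0) * g (snd p))"
    proof (rule sum.mono_neutral_right)
      show "finite (Dc m)" using Dc_finite True by blast
      show "(if (\<forall>l::lat. e l \<le> m l) then {(e, \<lambda>l. m l - e l)} else {}) \<subseteq> Dc m" by (auto simp: Dc_def)
      show "\<forall>p\<in>Dc m - (if (\<forall>l::lat. e l \<le> m l) then {(e, \<lambda>l. m l - e l)} else {}). (if fst p = e then 1 else 0) * g (snd p) = 0"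
      proof
        fix p assume p: "p \<in> Dc m - (if (\<forall>l::lat. e l \<le> m l) then {(e, \<lambda>l. m l - e l)} else {})"
        show "(if fst p = e then 1 else 0) * g (snd p) = 0"
        proof (cases "fst p = e")
          case True
          have h: "\<forall>l. fst p l + snd p l = m l" using p by (auto simp: Dc_def case_prod_beta)
          hence "\<forall>l::lat. e l \<le> m l" using True by (metis le_add1)
          moreover have "snd p = (\<lambda>l. m l - e l)"
          proof
            fix l show "snd p l = m l - e l" using h[rule_format, of l] True by simp
          qed
          ultimately have "p = (e, \<lambda>l. m l - e l)" using True by (metis prod.collapse)
          thus ?thesis using p \<open>\<forall>l::lat. e l \<le> m l\<close> by simp
        qed simp
      qed
    qed
    also have "\<dots> = ser_xmono e g m" by (simp add: ser_xmono_def)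
    finally show ?thesis by simp
  qed
qed

lemma mo_add: "ser_mul (mo a) (mo b) = (mo (\<lambda>l. a l + b l) :: 'a::comm_ring_1 ser)" if "fin a" "fin b"
proof -
  have "ser_mul (mo a) (mo b) = ser_xmono a (mo b :: 'a ser)" using ser_xmono_mo that cps_mo by metis
  also have "\<dots> = mo (\<lambda>l. a l + b l)"
  proof
    fix m show "ser_xmono a (mo b) m = (mo (\<lambda>l. a l + b l) m :: 'a)"
    proof (cases "\<forall>l. a l \<le> m l")
      case True
      have "((\<lambda>l. m l - a l) = b) = (m = (\<lambda>l. a l + b l))"
        using True by (auto simp: fun_eq_iff) (metis add_diff_cancel_left' le_add_diff_inverse)+
      thus ?thesis using True by (simp add: ser_xmono_def mo_def)
    next
      case False
      hence "m \<noteq> (\<lambda>l. a l + b l)" by auto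
      thus ?thesis using False by (simp add: ser_xmono_def mo_def)
    qed
  qed
  finally show ?thesis .
qed

lemma mo_zero: "mo (\<lambda>l. 0) = ser_one"
  by (simp add: mo_def ser_one_def)

lemma ser_xmono_inj: "ser_xmono e f = ser_xmono e g \<Longrightarrow> f = g"
proof
  fix m assume h: "ser_xmono e f = ser_xmono e g"
  have "ser_xmono e f (\<lambda>l. e l + m l) = ser_xmono e g (\<lambda>l. e l + m l)" using h by simp
  thus "f m = g m" by (simp add: ser_xmono_def)
qed


typedef (overloaded) 'a cs = "{f :: 'a::comm_ring_1 ser. cps f}"
  morphisms Rep_cs Abs_cs
  using cps_zero by blast

setup_lifting type_definition_cs

instantiation cs :: (comm_ring_1) comm_ring_1
begin
lift_definition zero_cs :: "'a cs" is ser_zero by (rule cps_zero)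
lift_definition one_cs :: "'a cs" is ser_one by (rule cps_one)
lift_definition plus_cs :: "'a cs \<Rightarrow> 'a cs \<Rightarrow> 'a cs" is ser_add by (rule cps_add)
lift_definition uminus_cs :: "'a cs \<Rightarrow> 'a cs" is ser_neg by (rule cps_neg)
lift_definition minus_cs :: "'a cs \<Rightarrow> 'a cs \<Rightarrow> 'a cs" is ser_diff by (rule cps_diff)
lift_definition times_cs :: "'a cs \<Rightarrow> 'a cs \<Rightarrow> 'a cs" is ser_mul by (rule cps_mul)
instance
proof
  fix a b c :: "'a cs"
  show "a * b * c = a * (b * c)" by transfer (rule ser_mul_assoc)
  show "a * b = b * a" by transfer (rule ser_mul_comm)
  show "1 * a = a" by transfer (rule ser_one_mul)
  show "(a + b) * c = a * c + b * c" by transfer (metis ser_mul_add ser_mul_comm)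
  show "a + b + c = a + (b + c)" by transfer (simp add: ser_add_def add.assoc)
  show "a + b = b + a" by transfer (simp add: ser_add_def add.commute)
  show "0 + a = a" by transfer (simp add: ser_add_def ser_zero_def)
  show "- a + a = 0" by transfer (simp add: ser_add_def ser_zero_def ser_neg_def)
  show "a - b = a + - b" by transfer (simp add: ser_add_def ser_diff_def ser_neg_def)
  show "(0::'a cs) \<noteq> 1"
  proof transfer
    show "(ser_zero::'a ser) \<noteq> ser_one"
    proof
      assume "(ser_zero::'a ser) = ser_one"
      hence "ser_zero (\<lambda>l. 0) = (ser_one (\<lambda>l. 0)::'a)" by simp
      thus False by (simp add: ser_zero_def ser_one_def)
    qed
  qed
qed
end

lift_definition xm :: "mono \<Rightarrow> 'a::comm_ring_1 cs" is "\<lambda>e. if fin e then mo e else ser_zero"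
  by (simp add: cps_mo cps_zero)

lemma xm_add: "fin a \<Longrightarrow> fin b \<Longrightarrow> xm (\<lambda>l. a l + b l) = xm a * xm b"
  by transfer (simp add: mo_add msupp_add)

lemma xm_zero: "xm (\<lambda>l. 0) = 1"
  by transfer (simp add: mo_zero msupp_def)

lemma Rep_xm_mult: "fin e \<Longrightarrow> Rep_cs (xm e * f) = ser_xmono e (Rep_cs f)"
  by transfer (simp add: ser_xmono_mo)

lemma xm_cancel: "fin e \<Longrightarrow> xm e * f = xm e * g \<Longrightarrow> f = g"
  by (metis Rep_xm_mult Rep_cs_inject ser_xmono_inj)

lemma Abs_xmono: "fin e \<Longrightarrow> cps f \<Longrightarrow> Abs_cs (ser_xmono e f) = xm e * Abs_cs f"
  by (metis Abs_cs_inverse Rep_cs_inverse Rep_xm_mult mem_Collect_eq)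

lemma Abs_add: "cps f \<Longrightarrow> cps g \<Longrightarrow> Abs_cs (ser_add f g) = Abs_cs f + Abs_cs g"
  by (metis Abs_cs_inverse mem_Collect_eq plus_cs.abs_eq eq_onp_same_args)
lemma Abs_mul: "cps f \<Longrightarrow> cps g \<Longrightarrow> Abs_cs (ser_mul f g) = Abs_cs f * Abs_cs g"
  by (metis times_cs.abs_eq eq_onp_same_args)
lemma Abs_neg: "cps f \<Longrightarrow> Abs_cs (ser_neg f) = - Abs_cs f"
  by (metis uminus_cs.abs_eq eq_onp_same_args)
lemma Abs_one: "Abs_cs ser_one = 1"
  by (metis one_cs.abs_eq)
lemma Abs_zero: "Abs_cs ser_zero = 0"
  by (metis zero_cs.abs_eq)

lemma msupp_comp: "bij w \<Longrightarrow> msupp (m \<circ> w) = inv w ` msupp m"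
proof -
  assume w: "bij w"
  show ?thesis
  proof (rule set_eqI)
    fix x
    have "x \<in> msupp (m \<circ> w) \<longleftrightarrow> m (w x) \<noteq> 0" by (simp add: msupp_def)
    moreover have "x \<in> inv w ` msupp m \<longleftrightarrow> w x \<in> msupp m"
    proof
      assume "x \<in> inv w ` msupp m"
      then obtain y where "y \<in> msupp m" "x = inv w y" by blast
      thus "w x \<in> msupp m" using w by (simp add: bij_inv_eq_iff)
    next
      assume "w x \<in> msupp m"
      moreover have "x = inv w (w x)" using w by (simp add: bij_is_inj)
      ultimately show "x \<in> inv w ` msupp m" by blast
    qed
    ultimately show "x \<in> msupp (m \<circ> w) \<longleftrightarrow> x \<in> inv w ` msupp m" by (simp add: msupp_def)
  qed
qed

lemma winv: "bij w \<Longrightarrow> w \<circ> inv w = id" "bij w \<Longrightarrow> inv w \<circ> w = id"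
  using bij_is_surj surj_iff bij_is_inj inj_iff by metis+

lemma fin_comp: "bij w \<Longrightarrow> fin (m \<circ> w) = fin m"
proof -
  assume w: "bij w"
  have "inj (inv w)" using w bij_imp_bij_inv bij_is_inj by blast
  hence "inj_on (inv w) (msupp m)" by (meson inj_on_subset subset_UNIV)
  thus ?thesis using w by (simp add: msupp_comp finite_image_iff)
qed

lemma deg_comp: assumes w: "bij w" shows "deg (m \<circ> w) = deg m"
proof -
  have i: "inj_on (inv w) (msupp m)" using w by (meson bij_imp_bij_inv bij_is_inj inj_on_subset subset_UNIV)
  have "deg (m \<circ> w) = sum (m \<circ> w) (inv w ` msupp m)" by (simp add: deg_def msupp_comp w)
  also have "\<dots> = sum (m \<circ> w \<circ> inv w) (msupp m)" by (simp add: sum.reindex[OF i])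
  also have "m \<circ> w \<circ> inv w = m" using winv(1)[OF w] by (simp add: comp_assoc)
  finally show ?thesis unfolding deg_def .
qed

lemma comp_inv_cancel: assumes "bij w" shows "m \<circ> w \<circ> inv w = m" "m \<circ> inv w \<circ> w = m"
  using winv[OF assms] by (simp_all add: comp_assoc)

lemma cps_act: assumes w: "bij w" and f: "cps f" shows "cps (ser_act w f)"
proof -
  have "{m. ser_act w f m \<noteq> 0 \<and> deg m = d} \<subseteq> (\<lambda>m. m \<circ> inv w) ` {m. f m \<noteq> 0 \<and> deg m = d}" for d
  proof
    fix m assume "m \<in> {m. ser_act w f m \<noteq> 0 \<and> deg m = d}"
    hence "f (m \<circ> w) \<noteq> 0" "deg (m \<circ> w) = d" by (auto simp: ser_act_def deg_comp w)
    moreover have "m = (m \<circ> w) \<circ> inv w" using comp_inv_cancel w by metis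
    ultimately show "m \<in> (\<lambda>m. m \<circ> inv w) ` {m. f m \<noteq> 0 \<and> deg m = d}" by blast
  qed
  hence "finite {m. ser_act w f m \<noteq> 0 \<and> deg m = d}" for d using f unfolding cps_def by (meson finite_imageI finite_subset)
  moreover have "ser_act w f m \<noteq> 0 \<Longrightarrow> fin m" for m using f fin_comp[OF w] unfolding cps_def ser_act_def by metis
  ultimately show ?thesis unfolding cps_def by blast
qed

lemma act_add: "ser_act w (ser_add f g) = ser_add (ser_act w f) (ser_act w g)"
  by (simp add: ser_act_def ser_add_def)
lemma act_neg: "ser_act w (ser_neg f) = ser_neg (ser_act w f)"
  by (simp add: ser_act_def ser_neg_def)
lemma act_zero: "ser_act w ser_zero = ser_zero"
  by (simp add: ser_act_def ser_zero_def)
lemma act_one: "bij w \<Longrightarrow> ser_act w ser_one = (ser_one :: 'a::comm_ring_1 ser)"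
proof
  fix m :: mono assume w: "bij w"
  have "(m \<circ> w = (\<lambda>l. 0)) = (m = (\<lambda>l. 0))"
    by (metis comp_inv_cancel(1) w comp_apply)
  thus "ser_act w ser_one m = (ser_one m :: 'a)" by (simp add: ser_act_def ser_one_def)
qed
lemma act_mo: "bij w \<Longrightarrow> ser_act w (mo e) = mo (e \<circ> inv w)"
proof
  fix m :: mono assume w: "bij w"
  have "(m \<circ> w = e) = (m = e \<circ> inv w)" by (metis comp_inv_cancel w)
  thus "ser_act w (mo e) m = mo (e \<circ> inv w) m" by (simp add: ser_act_def mo_def)
qed

lemma act_mul: assumes w: "bij w" shows "ser_act w (ser_mul f g) = ser_mul (ser_act w f) (ser_act w g)"
proof
  fix m
  show "ser_act w (ser_mul f g) m = ser_mul (ser_act w f) (ser_act w g) m"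
    unfolding ser_act_def ser_mul_Dc sum_Dc_split
  proof (rule sym, rule sum.reindex_bij_witness[where j = "\<lambda>(a,b). (a \<circ> w, b \<circ> w)" and i = "\<lambda>(a,b). (a \<circ> inv w, b \<circ> inv w)"])
    fix p assume p: "p \<in> Dc m"
    show "(\<lambda>(a,b). (a \<circ> inv w, b \<circ> inv w)) ((\<lambda>(a,b). (a \<circ> w, b \<circ> w)) p) = p"
      using w by (simp add: case_prod_beta comp_assoc winv)
    have h: "\<forall>l. fst p l + snd p l = m l" using p by (simp add: Dc_def case_prod_beta del: split_paired_All)
    show "(\<lambda>(a,b). (a \<circ> w, b \<circ> w)) p \<in> Dc (m \<circ> w)" using h by (simp add: Dc_def case_prod_beta del: split_paired_All)
    show "f (fst ((\<lambda>(a,b). (a \<circ> w, b \<circ> w)) p)) * g (snd ((\<lambda>(a,b). (a \<circ> w, b \<circ> w)) p)) = f (fst p \<circ> w) * g (snd p \<circ> w)"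
      by (simp add: case_prod_beta)
  next
    fix p assume p: "p \<in> Dc (m \<circ> w)"
    show "(\<lambda>(a,b). (a \<circ> w, b \<circ> w)) ((\<lambda>(a,b). (a \<circ> inv w, b \<circ> inv w)) p) = p"
      using w by (simp add: case_prod_beta comp_assoc winv)
    have "\<forall>l. fst p l + snd p l = m (w l)" using p by (auto simp: Dc_def case_prod_beta)
    hence "\<forall>l. fst p (inv w l) + snd p (inv w l) = m l" using w by (metis bij_inv_eq_iff)
    thus "(\<lambda>(a,b). (a \<circ> inv w, b \<circ> inv w)) p \<in> Dc m" by (auto simp: Dc_def case_prod_beta)
  qed
qed

lemma gen_ideal_add: "h1 \<in> gen_ideal G \<Longrightarrow> h2 \<in> gen_ideal G \<Longrightarrow> ser_add h1 h2 \<in> gen_ideal G"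
proof (induction h1 rule: gen_ideal.induct)
  case gen_zero
  have "ser_add ser_zero h2 = h2" by (simp add: ser_add_def ser_zero_def)
  thus ?case using gen_zero by simp
next
  case (gen_step g c h)
  have "ser_add (ser_add (ser_mul c g) h) h2 = ser_add (ser_mul c g) (ser_add h h2)"
    by (simp add: ser_add_def add.assoc)
  thus ?case using gen_step gen_ideal.gen_step by metis
qed

lemma gen_ideal_mul: "h \<in> gen_ideal G \<Longrightarrow> cps c \<Longrightarrow> ser_mul c h \<in> gen_ideal G"
proof (induction h rule: gen_ideal.induct)
  case gen_zero thus ?case by (simp add: ser_mul_zero gen_ideal.gen_zero)
next
  case (gen_step g c1 h)
  have "ser_mul c (ser_add (ser_mul c1 g) h) = ser_add (ser_mul (ser_mul c c1) g) (ser_mul c h)"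
    by (simp add: ser_mul_add ser_mul_assoc)
  moreover have "cps (ser_mul c c1)" using gen_step cps_mul by blast
  ultimately show ?case using gen_step gen_ideal.gen_step by metis
qed

lemma closed_zero: "ser_zero \<in> closed_ideal G"
  unfolding closed_ideal_def using cps_zero gen_ideal.gen_zero by blast

lemma closed_add: "f \<in> closed_ideal G \<Longrightarrow> g \<in> closed_ideal G \<Longrightarrow> ser_add f g \<in> closed_ideal G"
proof -
  assume f: "f \<in> closed_ideal G" and g: "g \<in> closed_ideal G"
  have "cps (ser_add f g)" using f g cps_add unfolding closed_ideal_def by blast
  moreover have "\<exists>j \<in> gen_ideal G. \<forall>m. deg m < n \<longrightarrow> ser_add f g m = j m" for n
  proof -
    obtain j1 where j1: "j1 \<in> gen_ideal G" "\<forall>m. deg m < n \<longrightarrow> f m = j1 m" using f unfolding closed_ideal_def by blast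
    obtain j2 where j2: "j2 \<in> gen_ideal G" "\<forall>m. deg m < n \<longrightarrow> g m = j2 m" using g unfolding closed_ideal_def by blast
    show ?thesis using j1 j2 gen_ideal_add[of j1 G j2] by (intro bexI[of _ "ser_add j1 j2"]) (auto simp: ser_add_def)
  qed
  ultimately show ?thesis unfolding closed_ideal_def by blast
qed

lemma closed_mul: "cps c \<Longrightarrow> f \<in> closed_ideal G \<Longrightarrow> ser_mul c f \<in> closed_ideal G"
proof -
  assume c: "cps c" and f: "f \<in> closed_ideal G"
  have cf: "cps f" using f unfolding closed_ideal_def by blast
  have "cps (ser_mul c f)" using c cf cps_mul by blast
  moreover have "\<exists>j \<in> gen_ideal G. \<forall>m. deg m < n \<longrightarrow> ser_mul c f m = j m" for n
  proof -
    obtain j where j: "j \<in> gen_ideal G" "\<forall>m. deg m < Suc n \<longrightarrow> f m = j m" using f unfolding closed_ideal_def by blast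
    have "\<forall>m. deg m < n \<longrightarrow> ser_mul c f m = ser_mul c j m"
    proof (intro allI impI)
      fix m assume dm: "deg m < n"
      show "ser_mul c f m = ser_mul c j m"
        unfolding ser_mul_Dc
      proof (rule sum.cong[OF refl])
        fix p assume p: "p \<in> Dc m"
        obtain a b where ab: "p = (a,b)" by (cases p)
        have "c a * f b = c a * j b"
        proof (cases "c a = 0")
          case False
          hence fa: "fin a" using c cps_fin by blast
          show ?thesis
          proof (cases "fin b")
            case True
            have mab: "m = (\<lambda>l. a l + b l)" using p ab by (auto simp: Dc_def)
            have "fin m" using mab fa True msupp_add by (metis finite_Un)
            hence "deg b \<le> deg m" using deg_le_Dc p ab by blast
            thus ?thesis using j dm by simp
          next
            case False
            thus ?thesis using j deg_nonfin by simp
          qed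
        qed simp
        thus "(case p of (m1, m2) \<Rightarrow> c m1 * f m2) = (case p of (m1, m2) \<Rightarrow> c m1 * j m2)" using ab by simp
      qed
    qed
    thus ?thesis using gen_ideal_mul[OF j(1) c] by blast
  qed
  ultimately show ?thesis unfolding closed_ideal_def by blast
qed


lemma finite_roots: "finite roots"
  unfolding roots_def Wgrp_def by simp

definition dnm :: "mono \<Rightarrow> mono" where
  "dnm e = (\<lambda>l. if l \<in> roots then e l else 0)"

lemma fin_dnm: "fin (dnm e)"
proof -
  have "msupp (dnm e) \<subseteq> roots" by (auto simp: msupp_def dnm_def)
  thus ?thesis using finite_roots finite_subset by blast
qed

lemma dnm_add: "dnm (\<lambda>l. a l + b l) = (\<lambda>l. dnm a l + dnm b l)"
  by (auto simp: dnm_def)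

lemma dnm_id: "msupp e \<subseteq> roots \<Longrightarrow> dnm e = e"
  by (auto simp: dnm_def msupp_def fun_eq_iff)

lemma fin_roots: "msupp e \<subseteq> roots \<Longrightarrow> fin e"
  using finite_roots finite_subset by blast

lemma xm_dnm_add: "xm (dnm (\<lambda>l. a l + b l)) = xm (dnm a) * xm (dnm b)"
  by (simp add: dnm_add xm_add fin_dnm)

definition lrel :: "'a::comm_ring_1 cs \<times> mono \<Rightarrow> 'a cs \<times> mono \<Rightarrow> bool" where
  "lrel p q \<longleftrightarrow> xm (dnm (snd q)) * fst p = xm (dnm (snd p)) * fst q"

lemma lrel_equivp: "equivp (lrel :: 'a::comm_ring_1 cs \<times> mono \<Rightarrow> _ \<Rightarrow> bool)"
proof (rule equivpI)
  show "reflp (lrel :: 'a cs \<times> mono \<Rightarrow> _)" by (auto intro: reflpI simp: lrel_def mult.commute)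
  show "symp (lrel :: 'a cs \<times> mono \<Rightarrow> _)" by (auto intro: sympI simp: lrel_def)
  show "transp (lrel :: 'a cs \<times> mono \<Rightarrow> _)"
  proof (rule transpI)
    fix p q r :: "'a cs \<times> mono"
    assume "lrel p q" "lrel q r"
    hence h1: "xm (dnm (snd q)) * fst p = xm (dnm (snd p)) * fst q"
      and h2: "xm (dnm (snd r)) * fst q = xm (dnm (snd q)) * fst r" by (auto simp: lrel_def)
    have "xm (dnm (snd q)) * (xm (dnm (snd r)) * fst p) = xm (dnm (snd q)) * (xm (dnm (snd p)) * fst r)"
    proof -
      have "xm (dnm (snd q)) * (xm (dnm (snd r)) * fst p) = xm (dnm (snd r)) * (xm (dnm (snd q)) * fst p)"
        by (simp add: algebra_simps)
      also have "\<dots> = xm (dnm (snd p)) * (xm (dnm (snd r)) * fst q)" using h1 by (simp add: algebra_simps)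
      also have "\<dots> = xm (dnm (snd q)) * (xm (dnm (snd p)) * fst r)" using h2 by (simp add: algebra_simps)
      finally show ?thesis .
    qed
    hence "xm (dnm (snd r)) * fst p = xm (dnm (snd p)) * fst r" using xm_cancel fin_dnm by blast
    thus "lrel p r" by (simp add: lrel_def)
  qed
qed

quotient_type (overloaded) 'a Lc = "'a::comm_ring_1 cs \<times> mono" / lrel
  by (rule lrel_equivp)

definition madd :: "mono \<Rightarrow> mono \<Rightarrow> mono" where "madd a b = (\<lambda>l. a l + b l)"
definition mzero :: mono where "mzero = (\<lambda>l. 0)"

lemma dnm_madd: "xm (dnm (madd a b)) = xm (dnm a) * xm (dnm b)"
  by (simp add: madd_def xm_dnm_add)
lemma dnm_mzero: "xm (dnm mzero) = 1"
proof -
  have "dnm mzero = (\<lambda>l. 0)" by (simp add: dnm_def mzero_def)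
  thus ?thesis by (simp add: xm_zero)
qed

lemma resp_plus:
  fixes f1 f2 g1 g2 :: "'a::comm_ring_1 cs"
  assumes h1: "xm (dnm a2) * f1 = xm (dnm a1) * f2" and h2: "xm (dnm b2) * g1 = xm (dnm b1) * g2"
  shows "xm (dnm (madd a2 b2)) * (xm (dnm b1) * f1 + xm (dnm a1) * g1)
       = xm (dnm (madd a1 b1)) * (xm (dnm b2) * f2 + xm (dnm a2) * g2)"
proof -
  have "xm (dnm (madd a2 b2)) * (xm (dnm b1) * f1 + xm (dnm a1) * g1)
      = xm (dnm b2) * xm (dnm b1) * (xm (dnm a2) * f1) + xm (dnm a2) * xm (dnm a1) * (xm (dnm b2) * g1)"
    by (simp add: dnm_madd algebra_simps)
  also have "\<dots> = xm (dnm b2) * xm (dnm b1) * (xm (dnm a1) * f2) + xm (dnm a2) * xm (dnm a1) * (xm (dnm b1) * g2)"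
    by (simp only: h1 h2)
  also have "\<dots> = xm (dnm (madd a1 b1)) * (xm (dnm b2) * f2 + xm (dnm a2) * g2)"
    by (simp add: dnm_madd algebra_simps)
  finally show ?thesis .
qed

lemma resp_minus:
  fixes f1 f2 g1 g2 :: "'a::comm_ring_1 cs"
  assumes h1: "xm (dnm a2) * f1 = xm (dnm a1) * f2" and h2: "xm (dnm b2) * g1 = xm (dnm b1) * g2"
  shows "xm (dnm (madd a2 b2)) * (xm (dnm b1) * f1 - xm (dnm a1) * g1)
       = xm (dnm (madd a1 b1)) * (xm (dnm b2) * f2 - xm (dnm a2) * g2)"
proof -
  have "xm (dnm (madd a2 b2)) * (xm (dnm b1) * f1 - xm (dnm a1) * g1)
      = xm (dnm b2) * xm (dnm b1) * (xm (dnm a2) * f1) - xm (dnm a2) * xm (dnm a1) * (xm (dnm b2) * g1)"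
    by (simp add: dnm_madd algebra_simps)
  also have "\<dots> = xm (dnm b2) * xm (dnm b1) * (xm (dnm a1) * f2) - xm (dnm a2) * xm (dnm a1) * (xm (dnm b1) * g2)"
    by (simp only: h1 h2)
  also have "\<dots> = xm (dnm (madd a1 b1)) * (xm (dnm b2) * f2 - xm (dnm a2) * g2)"
    by (simp add: dnm_madd algebra_simps)
  finally show ?thesis .
qed

lemma resp_times:
  fixes f1 f2 g1 g2 :: "'a::comm_ring_1 cs"
  assumes h1: "xm (dnm a2) * f1 = xm (dnm a1) * f2" and h2: "xm (dnm b2) * g1 = xm (dnm b1) * g2"
  shows "xm (dnm (madd a2 b2)) * (f1 * g1) = xm (dnm (madd a1 b1)) * (f2 * g2)"
proof -
  have "xm (dnm (madd a2 b2)) * (f1 * g1) = (xm (dnm a2) * f1) * (xm (dnm b2) * g1)"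
    by (simp add: dnm_madd algebra_simps)
  also have "\<dots> = (xm (dnm a1) * f2) * (xm (dnm b1) * g2)" by (simp only: h1 h2)
  also have "\<dots> = xm (dnm (madd a1 b1)) * (f2 * g2)" by (simp add: dnm_madd algebra_simps)
  finally show ?thesis .
qed

instantiation Lc :: (comm_ring_1) comm_ring_1
begin
lift_definition zero_Lc :: "'a Lc" is "(0, mzero)" .
lift_definition one_Lc :: "'a Lc" is "(1, mzero)" .
lift_definition plus_Lc :: "'a Lc \<Rightarrow> 'a Lc \<Rightarrow> 'a Lc" is
  "\<lambda>p q. (xm (dnm (snd q)) * fst p + xm (dnm (snd p)) * fst q, madd (snd p) (snd q))"
  unfolding lrel_def using resp_plus by auto
lift_definition uminus_Lc :: "'a Lc \<Rightarrow> 'a Lc" is "\<lambda>p. (- fst p, snd p)"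
  by (auto simp: lrel_def)
lift_definition minus_Lc :: "'a Lc \<Rightarrow> 'a Lc \<Rightarrow> 'a Lc" is
  "\<lambda>p q. (xm (dnm (snd q)) * fst p - xm (dnm (snd p)) * fst q, madd (snd p) (snd q))"
  unfolding lrel_def using resp_minus by auto
lift_definition times_Lc :: "'a Lc \<Rightarrow> 'a Lc \<Rightarrow> 'a Lc" is
  "\<lambda>p q. (fst p * fst q, madd (snd p) (snd q))"
  unfolding lrel_def using resp_times by auto
instance
proof
  fix a b c :: "'a Lc"
  show "a * b * c = a * (b * c)" by transfer (simp add: lrel_def dnm_madd algebra_simps)
  show "a * b = b * a" by transfer (simp add: lrel_def dnm_madd algebra_simps)
  show "1 * a = a" by transfer (simp add: lrel_def dnm_madd dnm_mzero algebra_simps)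
  show "(a + b) * c = a * c + b * c" by transfer (simp add: lrel_def dnm_madd algebra_simps)
  show "a + b + c = a + (b + c)" by transfer (simp add: lrel_def dnm_madd algebra_simps)
  show "a + b = b + a" by transfer (simp add: lrel_def dnm_madd algebra_simps)
  show "0 + a = a" by transfer (simp add: lrel_def dnm_madd dnm_mzero algebra_simps)
  show "- a + a = 0" by transfer (simp add: lrel_def dnm_madd dnm_mzero algebra_simps)
  show "a - b = a + - b" by transfer (simp add: lrel_def dnm_madd algebra_simps)
  show "(0::'a Lc) \<noteq> 1" by transfer (simp add: lrel_def dnm_mzero)
qed
end


lemma cps_xmono: "fin e \<Longrightarrow> cps f \<Longrightarrow> cps (ser_xmono e (f::'a::comm_ring_1 ser))"
  by (simp add: ser_xmono_mo cps_mul cps_mo)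

lemma msupp_lam_add: "msupp (\<lambda>l. (a::mono) l + b l) \<subseteq> roots" if "msupp a \<subseteq> roots" "msupp b \<subseteq> roots"
  using that by (simp add: msupp_add)

lemma ok_qadd: "qrep_ok p \<Longrightarrow> qrep_ok q \<Longrightarrow> qrep_ok (qadd p q)"
proof -
  assume p: "qrep_ok p" and q: "qrep_ok q"
  have "cps (ser_xmono (snd q) (fst p))" using p q unfolding qrep_ok_def by (intro cps_xmono fin_roots) auto
  moreover have "cps (ser_xmono (snd p) (fst q))" using p q unfolding qrep_ok_def by (intro cps_xmono fin_roots) auto
  ultimately show ?thesis using p q unfolding qrep_ok_def qadd_def by (simp add: cps_add msupp_lam_add)
qed
lemma ok_qmul: "qrep_ok p \<Longrightarrow> qrep_ok q \<Longrightarrow> qrep_ok (qmul p q)"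
  unfolding qrep_ok_def qmul_def by (simp add: cps_mul msupp_lam_add)
lemma ok_qneg: "qrep_ok p \<Longrightarrow> qrep_ok (qneg p)"
  unfolding qrep_ok_def qneg_def by (auto intro!: cps_neg)
lemma ok_qsub: "qrep_ok p \<Longrightarrow> qrep_ok q \<Longrightarrow> qrep_ok (qsub p q)"
  unfolding qsub_def using ok_qadd ok_qneg by blast
lemma ok_qzero: "qrep_ok qzero"
  unfolding qrep_ok_def qzero_def using cps_zero by (simp add: msupp_def)
lemma ok_qone: "qrep_ok qone"
  unfolding qrep_ok_def qone_def using cps_one by (simp add: msupp_def)
lemma ok_qy: "g \<in> roots \<Longrightarrow> qrep_ok (qy g)"
  unfolding qrep_ok_def qy_def using cps_one by (auto simp: msupp_def)
lemma ok_qsum: "\<forall>x\<in>set xs. qrep_ok x \<Longrightarrow> qrep_ok (qsum xs)"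
  unfolding qsum_def by (induction xs) (auto simp: ok_qzero ok_qadd)

definition goodw :: "(lat \<Rightarrow> lat) \<Rightarrow> bool" where
  "goodw w \<longleftrightarrow> bij w \<and> w ` roots = roots"

lemma goodw_inv_roots: "goodw w \<Longrightarrow> (inv w l \<in> roots) = (l \<in> roots)"
  unfolding goodw_def by (metis bij_inv_eq_iff image_iff)

lemma msupp_comp_inv: "bij w \<Longrightarrow> msupp (e \<circ> inv w) = w ` msupp e"
proof -
  assume w: "bij w"
  have "bij (inv w)" using w bij_imp_bij_inv by blast
  moreover have "inv (inv w) = w" using w by (simp add: bij_imp_bij_inv inv_inv_eq)
  ultimately show ?thesis using msupp_comp by metis
qed

lemma ok_qact: "goodw w \<Longrightarrow> qrep_ok p \<Longrightarrow> qrep_ok (qact w p)"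
proof -
  assume w: "goodw w" and p: "qrep_ok p"
  have "cps (ser_act w (fst p))" using w p unfolding goodw_def qrep_ok_def by (auto intro!: cps_act)
  moreover have "msupp (snd p \<circ> inv w) \<subseteq> roots"
  proof -
    have "msupp (snd p \<circ> inv w) = w ` msupp (snd p)" using w msupp_comp_inv unfolding goodw_def by blast
    also have "\<dots> \<subseteq> w ` roots" using p unfolding qrep_ok_def by (intro image_mono) auto
    finally show ?thesis using w unfolding goodw_def by simp
  qed
  ultimately show ?thesis unfolding qrep_ok_def qact_def by simp
qed

definition labs :: "'a::comm_ring_1 qrep \<Rightarrow> 'a Lc" where
  "labs p = abs_Lc (if qrep_ok p then (Abs_cs (fst p), snd p) else (0, mzero))"

lemma labs_ok: "qrep_ok p \<Longrightarrow> labs p = abs_Lc (Abs_cs (fst p), snd p)"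
  by (simp add: labs_def)

lemma okD: "qrep_ok p \<Longrightarrow> cps (fst p)" "qrep_ok p \<Longrightarrow> msupp (snd p) \<subseteq> roots"
  by (simp_all add: qrep_ok_def)

lemma labs_qadd: assumes p: "qrep_ok p" and q: "qrep_ok q" shows "labs (qadd p q) = labs p + labs q"
proof -
  have fp: "fin (snd p)" "fin (snd q)" using p q okD fin_roots by blast+
  have e: "Abs_cs (ser_add (ser_xmono (snd q) (fst p)) (ser_xmono (snd p) (fst q)))
     = xm (snd q) * Abs_cs (fst p) + xm (snd p) * Abs_cs (fst q)"
    using fp okD[OF p] okD[OF q] by (simp add: Abs_add cps_xmono Abs_xmono)
  show ?thesis
    unfolding labs_ok[OF ok_qadd[OF p q]] labs_ok[OF p] labs_ok[OF q] plus_Lc.abs_eq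
    using e okD[OF p] okD[OF q] by (simp add: qadd_def dnm_id madd_def)
qed

lemma labs_qmul: assumes p: "qrep_ok p" and q: "qrep_ok q" shows "labs (qmul p q) = labs p * labs q"
  unfolding labs_ok[OF ok_qmul[OF p q]] labs_ok[OF p] labs_ok[OF q] times_Lc.abs_eq
  using okD[OF p] okD[OF q] by (simp add: qmul_def madd_def Abs_mul)

lemma labs_qneg: assumes p: "qrep_ok p" shows "labs (qneg p) = - labs p"
  unfolding labs_ok[OF ok_qneg[OF p]] labs_ok[OF p] uminus_Lc.abs_eq
  using okD[OF p] by (simp add: qneg_def Abs_neg)

lemma labs_qsub: "qrep_ok p \<Longrightarrow> qrep_ok q \<Longrightarrow> labs (qsub p q) = labs p - labs q"
  by (simp add: qsub_def labs_qadd labs_qneg ok_qneg)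

lemma labs_qzero: "labs qzero = 0"
  unfolding labs_ok[OF ok_qzero] zero_Lc.abs_eq by (simp add: qzero_def mzero_def Abs_zero)
lemma labs_qone: "labs qone = 1"
  unfolding labs_ok[OF ok_qone] one_Lc.abs_eq by (simp add: qone_def mzero_def Abs_one)

lemma labs_qsum: "\<forall>x\<in>set xs. qrep_ok x \<Longrightarrow> labs (qsum xs) = sum_list (map labs xs)"
proof (induction xs)
  case Nil thus ?case by (simp add: qsum_def labs_qzero)
next
  case (Cons a xs)
  have e: "qsum (a # xs) = qadd a (qsum xs)" by (simp add: qsum_def)
  have a: "qrep_ok a" and xs: "\<forall>x\<in>set xs. qrep_ok x" using Cons.prems by auto
  show ?case unfolding e labs_qadd[OF a ok_qsum[OF xs]] Cons.IH[OF xs] by simp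
qed

definition Yv :: "lat \<Rightarrow> 'a::comm_ring_1 Lc" where "Yv g = labs (qy g)"
definition dl :: "lat \<Rightarrow> mono" where "dl g = (\<lambda>l. if l = g then 1 else 0)"
definition Xv :: "lat \<Rightarrow> 'a::comm_ring_1 Lc" where "Xv g = abs_Lc (xm (dl g), mzero)"

lemma XY: assumes g: "g \<in> roots" shows "Xv g * Yv g = 1"
proof -
  have dlr: "dnm (dl g) = dl g" using g by (auto simp: dnm_def dl_def)
  have m: "madd mzero (dl g) = dl g" by (simp add: madd_def mzero_def dl_def)
  have q: "qy g = (ser_one, dl g)" by (simp add: qy_def dl_def)
  show ?thesis
    unfolding Xv_def Yv_def labs_ok[OF ok_qy[OF g]] times_Lc.abs_eq one_Lc.abs_eq Lc.abs_eq_iff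
    by (simp add: lrel_def q Abs_one dnm_mzero dlr m)
qed

definition inI :: "'a::comm_ring_1 \<Rightarrow> (nat \<Rightarrow> nat \<Rightarrow> 'a) \<Rightarrow> 'a Lc \<Rightarrow> bool" where
  "inI ph F z \<longleftrightarrow> (\<exists>f e u. z = abs_Lc (f, e) \<and> msupp u \<subseteq> roots \<and> Rep_cs (xm u * f) \<in> Jbar ph F)"

lemma J_mul: "Rep_cs x \<in> Jbar ph F \<Longrightarrow> Rep_cs (c * x) \<in> Jbar ph F"
  unfolding Jbar_def by (metis Rep_cs closed_mul mem_Collect_eq times_cs.rep_eq)
lemma J_add: "Rep_cs x \<in> Jbar ph F \<Longrightarrow> Rep_cs y \<in> Jbar ph F \<Longrightarrow> Rep_cs (x + y) \<in> Jbar ph F"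
  unfolding Jbar_def by (metis closed_add plus_cs.rep_eq)
lemma J_zero: "Rep_cs 0 \<in> Jbar ph F"
  unfolding Jbar_def by (metis closed_zero zero_cs.rep_eq)

lemma msupp_dnm: "msupp (dnm e) \<subseteq> roots"
  by (auto simp: msupp_def dnm_def)

lemma inI_rep: assumes "inI ph F (abs_Lc (f, e))"
  shows "\<exists>u. msupp u \<subseteq> roots \<and> Rep_cs (xm u * f) \<in> Jbar ph F"
proof -
  obtain f' e' u where h: "abs_Lc (f, e) = abs_Lc (f', e')" "msupp u \<subseteq> roots" "Rep_cs (xm u * f') \<in> Jbar ph F"
    using assms unfolding inI_def by blast
  have r: "xm (dnm e') * f = xm (dnm e) * f'" using h(1) by (simp add: Lc.abs_eq_iff lrel_def)
  have "Rep_cs (xm (madd u (dnm e')) * f) \<in> Jbar ph F"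
  proof -
    have "xm (madd u (dnm e')) * f = xm u * (xm (dnm e') * f)"
      using fin_roots[OF h(2)] fin_dnm by (simp add: madd_def xm_add algebra_simps)
    also have "\<dots> = xm u * (xm (dnm e) * f')" using r by simp
    also have "\<dots> = xm (dnm e) * (xm u * f')" by (simp add: algebra_simps)
    finally have "xm (madd u (dnm e')) * f = xm (dnm e) * (xm u * f')" .
    thus ?thesis using J_mul h(3) by metis
  qed
  moreover have "msupp (madd u (dnm e')) \<subseteq> roots" using h(2) msupp_dnm msupp_add by (simp add: madd_def)
  ultimately show ?thesis by blast
qed

lemma abs_surj: "\<exists>f e. (a::'a::comm_ring_1 Lc) = abs_Lc (f, e)"
proof -
  have "\<exists>x. a = abs_Lc x" by (induct a rule: Lc.abs_induct) auto
  thus ?thesis by auto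
qed

lemma inI_zero: "inI ph F 0"
  unfolding inI_def zero_Lc.abs_eq using J_zero by (intro exI[of _ 0] exI[of _ mzero] exI[of _ mzero])
    (simp add: msupp_def mzero_def)

lemma inI_add: assumes a: "inI ph F a" and b: "inI ph F b" shows "inI ph F (a + b)"
proof -
  obtain f e where fe: "a = abs_Lc (f, e)" using abs_surj by blast
  obtain g d where gd: "b = abs_Lc (g, d)" using abs_surj by blast
  obtain u where u: "msupp u \<subseteq> roots" "Rep_cs (xm u * f) \<in> Jbar ph F" using inI_rep a fe by blast
  obtain v where v: "msupp v \<subseteq> roots" "Rep_cs (xm v * g) \<in> Jbar ph F" using inI_rep b gd by blast
  have "xm (madd u v) * (xm (dnm d) * f + xm (dnm e) * g)
      = (xm v * xm (dnm d)) * (xm u * f) + (xm u * xm (dnm e)) * (xm v * g)"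
    using fin_roots[OF u(1)] fin_roots[OF v(1)] by (simp add: madd_def xm_add algebra_simps)
  hence "Rep_cs (xm (madd u v) * (xm (dnm d) * f + xm (dnm e) * g)) \<in> Jbar ph F"
    using J_add J_mul u v by metis
  moreover have "msupp (madd u v) \<subseteq> roots" using u v msupp_add by (simp add: madd_def)
  ultimately show ?thesis unfolding inI_def fe gd plus_Lc.abs_eq by auto
qed

lemma inI_mul: assumes a: "inI ph F a" shows "inI ph F (c * a)"
proof -
  obtain f e where fe: "a = abs_Lc (f, e)" using abs_surj by blast
  obtain g d where gd: "c = abs_Lc (g, d)" using abs_surj by blast
  obtain u where u: "msupp u \<subseteq> roots" "Rep_cs (xm u * f) \<in> Jbar ph F" using inI_rep a fe by blast
  have "xm u * (g * f) = g * (xm u * f)" by (simp add: algebra_simps)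
  hence "Rep_cs (xm u * (g * f)) \<in> Jbar ph F" using J_mul u by metis
  thus ?thesis unfolding inI_def fe gd times_Lc.abs_eq using u by auto
qed

lemma inI_neg: "inI ph F a \<Longrightarrow> inI ph F (- a)"
  using inI_mul[of ph F a "-1"] by simp
lemma inI_diff: "inI ph F a \<Longrightarrow> inI ph F b \<Longrightarrow> inI ph F (a - b)"
  by (metis diff_conv_add_uminus inI_add inI_neg)

lemma qeq_iff: assumes p: "qrep_ok p" and q: "qrep_ok q"
  shows "qeq ph F p q \<longleftrightarrow> inI ph F (labs p - labs q)"
proof -
  have fp: "fin (snd p)" "fin (snd q)" using p q okD fin_roots by blast+
  let ?d = "xm (snd q) * Abs_cs (fst p) - xm (snd p) * Abs_cs (fst q)"
  have e1: "labs p - labs q = abs_Lc (?d, madd (snd p) (snd q))"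
    unfolding labs_ok[OF p] labs_ok[OF q] minus_Lc.abs_eq using okD[OF p] okD[OF q] by (simp add: dnm_id)
  have e2: "Rep_cs (xm u * ?d) = ser_xmono u (ser_diff (ser_xmono (snd q) (fst p)) (ser_xmono (snd p) (fst q)))"
    if "msupp u \<subseteq> roots" for u
  proof -
    have a1: "Rep_cs (xm (snd q) * Abs_cs (fst p)) = ser_xmono (snd q) (fst p)"
      unfolding Rep_xm_mult[OF fp(2)] using Abs_cs_inverse[of "fst p"] okD(1)[OF p] by simp
    have a2: "Rep_cs (xm (snd p) * Abs_cs (fst q)) = ser_xmono (snd p) (fst q)"
      unfolding Rep_xm_mult[OF fp(1)] using Abs_cs_inverse[of "fst q"] okD(1)[OF q] by simp
    have "Rep_cs ?d = ser_diff (ser_xmono (snd q) (fst p)) (ser_xmono (snd p) (fst q))"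
      by (simp only: minus_cs.rep_eq a1 a2)
    thus ?thesis using Rep_xm_mult fin_roots[OF that] by metis
  qed
  show ?thesis
  proof
    assume "qeq ph F p q"
    then obtain u where "msupp u \<subseteq> roots"
      "ser_xmono u (ser_diff (ser_xmono (snd q) (fst p)) (ser_xmono (snd p) (fst q))) \<in> Jbar ph F"
      unfolding qeq_def by blast
    note u = this
    have "Rep_cs (xm u * ?d) \<in> Jbar ph F" using e2[OF u(1)] u(2) by simp
    thus "inI ph F (labs p - labs q)" unfolding e1 inI_def using u(1) by blast
  next
    assume "inI ph F (labs p - labs q)"
    then obtain u where "msupp u \<subseteq> roots" "Rep_cs (xm u * ?d) \<in> Jbar ph F"
      unfolding e1 using inI_rep by blast
    note u = this
    have "ser_xmono u (ser_diff (ser_xmono (snd q) (fst p)) (ser_xmono (snd p) (fst q))) \<in> Jbar ph F"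
      using e2[OF u(1)] u(2) by simp
    thus "qeq ph F p q" unfolding qeq_def using u(1) by blast
  qed
qed


definition csact :: "(lat \<Rightarrow> lat) \<Rightarrow> 'a::comm_ring_1 cs \<Rightarrow> 'a cs" where
  "csact w f = Abs_cs (ser_act w (Rep_cs f))"

lemma Rep_csact: "bij w \<Longrightarrow> Rep_cs (csact w f) = ser_act w (Rep_cs f)"
  unfolding csact_def using cps_act Rep_cs Abs_cs_inverse by (metis mem_Collect_eq)

lemma csact_eqI: "bij w \<Longrightarrow> Rep_cs (csact w a) = Rep_cs b \<Longrightarrow> csact w a = b"
  using Rep_cs_inject by blast

lemma csact_add: "bij w \<Longrightarrow> csact w (a + b) = csact w a + csact w b"
  by (rule Rep_cs_inject[THEN iffD1]) (simp add: Rep_csact plus_cs.rep_eq act_add)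
lemma csact_mul: "bij w \<Longrightarrow> csact w (a * b) = csact w a * csact w b"
  by (rule Rep_cs_inject[THEN iffD1]) (simp add: Rep_csact times_cs.rep_eq act_mul)
lemma csact_neg: "bij w \<Longrightarrow> csact w (- a) = - csact w a"
  by (rule Rep_cs_inject[THEN iffD1]) (simp add: Rep_csact uminus_cs.rep_eq act_neg)
lemma csact_one: "bij w \<Longrightarrow> csact w 1 = 1"
  by (rule Rep_cs_inject[THEN iffD1]) (simp add: Rep_csact one_cs.rep_eq act_one)
lemma csact_zero: "bij w \<Longrightarrow> csact w 0 = 0"
  by (rule Rep_cs_inject[THEN iffD1]) (simp add: Rep_csact zero_cs.rep_eq act_zero)

lemma Rep_xm: "fin e \<Longrightarrow> Rep_cs (xm e) = mo e"
  by (simp add: xm.rep_eq)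

lemma fin_comp_inv: "bij w \<Longrightarrow> fin (e \<circ> inv w) = fin e"
proof -
  assume w: "bij w"
  have "inj_on w (msupp e)" using w bij_is_inj inj_on_subset by blast
  thus ?thesis using w by (simp add: msupp_comp_inv finite_image_iff)
qed

lemma csact_xm: "bij w \<Longrightarrow> fin e \<Longrightarrow> csact w (xm e) = xm (e \<circ> inv w)"
  by (rule Rep_cs_inject[THEN iffD1]) (simp add: Rep_csact Rep_xm act_mo fin_comp_inv)

lemma dnm_comp: "goodw w \<Longrightarrow> dnm (e \<circ> inv w) = dnm e \<circ> inv w"
  by (auto simp: dnm_def fun_eq_iff goodw_inv_roots)

lemma goodw_bij: "goodw w \<Longrightarrow> bij w" by (simp add: goodw_def)

lemma xm_dnm_comp: "goodw w \<Longrightarrow> csact w (xm (dnm e)) = xm (dnm (e \<circ> inv w))"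
  by (simp add: dnm_comp csact_xm goodw_bij fin_dnm)

definition lact :: "(lat \<Rightarrow> lat) \<Rightarrow> 'a::comm_ring_1 Lc \<Rightarrow> 'a Lc" where
  "lact w z = (if goodw w then abs_Lc (csact w (fst (rep_Lc z)), snd (rep_Lc z) \<circ> inv w) else z)"

lemma lact_resp: assumes w: "goodw w" and r: "lrel (f, e) (g, d)"
  shows "lrel (csact w f, e \<circ> inv w) (csact w g, d \<circ> inv w)"
proof -
  have h: "xm (dnm d) * f = xm (dnm e) * g" using r by (simp add: lrel_def)
  have "xm (dnm (d \<circ> inv w)) * csact w f = csact w (xm (dnm d) * f)"
    using w by (simp add: csact_mul xm_dnm_comp goodw_bij)
  also have "\<dots> = csact w (xm (dnm e) * g)" using h by simp
  also have "\<dots> = xm (dnm (e \<circ> inv w)) * csact w g"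
    using w by (simp add: csact_mul xm_dnm_comp goodw_bij)
  finally show ?thesis by (simp add: lrel_def)
qed

lemma lact_abs: assumes w: "goodw w" shows "lact w (abs_Lc (f, e)) = abs_Lc (csact w f, e \<circ> inv w)"
proof -
  have "lrel (rep_Lc (abs_Lc (f, e))) (f, e)"
    using Lc.abs_eq_iff Quotient3_abs_rep[OF Quotient3_Lc] by metis
  hence "lrel (csact w (fst (rep_Lc (abs_Lc (f, e)))), snd (rep_Lc (abs_Lc (f, e))) \<circ> inv w) (csact w f, e \<circ> inv w)"
    using lact_resp[OF w] by (metis prod.collapse)
  thus ?thesis unfolding lact_def using w by (simp add: Lc.abs_eq_iff)
qed

lemma madd_comp: "madd a b \<circ> v = madd (a \<circ> v) (b \<circ> v)"
  by (simp add: madd_def fun_eq_iff)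

lemma lact_add: assumes w: "goodw w" shows "lact w (a + b) = lact w a + lact w b"
proof -
  obtain f e where a: "a = abs_Lc (f, e)" using abs_surj by blast
  obtain g d where b: "b = abs_Lc (g, d)" using abs_surj by blast
  show ?thesis unfolding a b plus_Lc.abs_eq using w
    by (simp add: lact_abs csact_add csact_mul xm_dnm_comp goodw_bij madd_comp plus_Lc.abs_eq)
qed

lemma lact_mul: assumes w: "goodw w" shows "lact w (a * b) = lact w a * lact w b"
proof -
  obtain f e where a: "a = abs_Lc (f, e)" using abs_surj by blast
  obtain g d where b: "b = abs_Lc (g, d)" using abs_surj by blast
  show ?thesis unfolding a b times_Lc.abs_eq using w
    by (simp add: lact_abs csact_mul goodw_bij madd_comp times_Lc.abs_eq)
qed

lemma lact_neg: assumes w: "goodw w" shows "lact w (- a) = - lact w a"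
proof -
  obtain f e where a: "a = abs_Lc (f, e)" using abs_surj by blast
  show ?thesis unfolding a uminus_Lc.abs_eq using w
    by (simp add: lact_abs csact_neg goodw_bij uminus_Lc.abs_eq)
qed

lemma mzero_comp: "mzero \<circ> v = mzero" by (simp add: mzero_def fun_eq_iff)

lemma lact_one: assumes w: "goodw w" shows "lact w 1 = 1"
  unfolding one_Lc.abs_eq using w by (simp add: lact_abs csact_one goodw_bij mzero_comp)

lemma lact_zero: assumes w: "goodw w" shows "lact w 0 = 0"
  unfolding zero_Lc.abs_eq using w by (simp add: lact_abs csact_zero goodw_bij mzero_comp)

lemma lact_diff: "goodw w \<Longrightarrow> lact w (a - b) = lact w a - lact w b"
  by (metis diff_conv_add_uminus lact_add lact_neg)

lemma labs_qact: assumes w: "goodw w" and p: "qrep_ok p" shows "labs (qact w p) = lact w (labs p)"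
proof -
  have "csact w (Abs_cs (fst p)) = Abs_cs (ser_act w (fst p))"
    unfolding csact_def using okD(1)[OF p] Abs_cs_inverse by (metis mem_Collect_eq)
  thus ?thesis unfolding labs_ok[OF ok_qact[OF w p]] labs_ok[OF p] lact_abs[OF w]
    by (simp add: qact_def)
qed

lemma qact_qy: assumes w: "goodw w" shows "qact w (qy g) = qy (w g)"
proof -
  have "(\<lambda>l. if l = g then 1 else 0) \<circ> inv w = (\<lambda>l. if l = w g then 1 else (0::nat))"
  proof
    fix l
    have "(inv w l = g) = (l = w g)" using goodw_bij[OF w] by (metis bij_inv_eq_iff)
    thus "((\<lambda>l. if l = g then 1 else 0) \<circ> inv w) l = (if l = w g then 1 else (0::nat))" by simp
  qed
  thus ?thesis using w by (simp add: qact_def qy_def act_one goodw_bij)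
qed

lemma goodw_roots: "goodw w \<Longrightarrow> g \<in> roots \<Longrightarrow> w g \<in> roots"
  unfolding goodw_def by blast

lemma lact_Y: assumes w: "goodw w" and g: "g \<in> roots" shows "lact w (Yv g) = Yv (w g)"
  unfolding Yv_def labs_qact[OF w ok_qy[OF g], symmetric] qact_qy[OF w] ..


type_synonym mat = "(zphi \<times> zphi) \<times> (zphi \<times> zphi)"

definition lin :: "mat \<Rightarrow> lat \<Rightarrow> lat" where
  "lin M l = (zp_add (zp_mul (fst (fst M)) (fst l)) (zp_mul (snd (fst M)) (snd l)),
              zp_add (zp_mul (fst (snd M)) (fst l)) (zp_mul (snd (snd M)) (snd l)))"

definition mmul :: "mat \<Rightarrow> mat \<Rightarrow> mat" where
  "mmul M N = ((zp_add (zp_mul (fst (fst M)) (fst (fst N))) (zp_mul (snd (fst M)) (fst (snd N))),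
                zp_add (zp_mul (fst (fst M)) (snd (fst N))) (zp_mul (snd (fst M)) (snd (snd N)))),
               (zp_add (zp_mul (fst (snd M)) (fst (fst N))) (zp_mul (snd (snd M)) (fst (snd N))),
                zp_add (zp_mul (fst (snd M)) (snd (fst N))) (zp_mul (snd (snd M)) (snd (snd N)))))"

definition mI :: mat where "mI = (((1,0),(0,0)),((0,0),(1,0)))"
definition mA :: mat where "mA = (((-1,0),(0,1)),((0,0),(1,0)))"
definition mB :: mat where "mB = (((1,0),(0,0)),((0,1),(-1,0)))"

definition mdet :: "mat \<Rightarrow> zphi" where
  "mdet M = zp_add (zp_mul (fst (fst M)) (snd (snd M))) (zp_neg (zp_mul (snd (fst M)) (fst (snd M))))"
definition madj :: "mat \<Rightarrow> mat" where
  "madj M = ((zp_mul (mdet M) (snd (snd M)), zp_neg (zp_mul (mdet M) (snd (fst M)))),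
             (zp_neg (zp_mul (mdet M) (fst (snd M))), zp_mul (mdet M) (fst (fst M))))"

lemma zp_simps:
  "zp_add (a, b) (c, d) = (a + c, b + d)"
  "zp_mul (a, b) (c, d) = (a * c + b * d, a * d + b * c + b * d)"
  "zp_neg (a, b) = (- a, - b)"
  by (simp_all add: zp_add_def zp_mul_def zp_neg_def)

lemma lin_apply: "lin ((m11, m12), (m21, m22)) (a, b) = (zp_add (zp_mul m11 a) (zp_mul m12 b), zp_add (zp_mul m21 a) (zp_mul m22 b))"
  by (simp add: lin_def)

lemma mmul_simp: "mmul ((m11, m12), (m21, m22)) ((n11, n12), (n21, n22)) =
   ((zp_add (zp_mul m11 n11) (zp_mul m12 n21), zp_add (zp_mul m11 n12) (zp_mul m12 n22)),
    (zp_add (zp_mul m21 n11) (zp_mul m22 n21), zp_add (zp_mul m21 n12) (zp_mul m22 n22)))"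
  by (simp add: mmul_def)

lemma lin_comp_pt: "lin M (lin N l) = lin (mmul M N) l"
proof -
  obtain m11 m12 m21 m22 where M: "M = ((m11, m12), (m21, m22))" by (metis prod.collapse)
  obtain n11 n12 n21 n22 where N: "N = ((n11, n12), (n21, n22))" by (metis prod.collapse)
  obtain a b where l: "l = (a, b)" by (cases l)
  obtain a1 a2 where a: "a = (a1, a2)" by (cases a)
  obtain b1 b2 where b: "b = (b1, b2)" by (cases b)
  show ?thesis unfolding M N l a b lin_apply mmul_simp
    apply (cases m11, cases m12, cases m21, cases m22, cases n11, cases n12, cases n21, cases n22)
    by (simp add: zp_simps algebra_simps)
qed

lemma lin_comp: "lin M \<circ> lin N = lin (mmul M N)"
  by (rule ext) (simp add: lin_comp_pt)

lemma lin_comp2: "lin M \<circ> (lin N \<circ> f) = lin (mmul M N) \<circ> f"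
  by (simp add: comp_assoc[symmetric] lin_comp)

lemma lin_I: "id = lin mI"
proof
  fix l :: lat
  obtain a b where l: "l = (a, b)" by (cases l)
  obtain a1 a2 where a: "a = (a1, a2)" by (cases a)
  obtain b1 b2 where b: "b = (b1, b2)" by (cases b)
  show "id l = lin mI l" unfolding l a b mI_def lin_apply by (simp add: zp_simps)
qed

lemma lin_eq: "(lin M = lin N) = (M = N)"
proof
  assume h: "lin M = lin N"
  obtain m11 m12 m21 m22 where M: "M = ((m11, m12), (m21, m22))" by (metis prod.collapse)
  obtain n11 n12 n21 n22 where N: "N = ((n11, n12), (n21, n22))" by (metis prod.collapse)
  have "lin M ((1,0),(0,0)) = lin N ((1,0),(0,0))" "lin M ((0,0),(1,0)) = lin N ((0,0),(1,0))" using h by simp_all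
  thus "M = N" unfolding M N lin_apply
    by (cases m11, cases m12, cases m21, cases m22, cases n11, cases n12, cases n21, cases n22) (simp add: zp_simps)
qed simp

lemma sa_lin: "s_alpha = lin mA"
proof
  fix l :: lat
  obtain a b where l: "l = (a, b)" by (cases l)
  obtain a1 a2 where a: "a = (a1, a2)" by (cases a)
  obtain b1 b2 where b: "b = (b1, b2)" by (cases b)
  show "s_alpha l = lin mA l" unfolding l a b mA_def lin_apply s_alpha_def by (simp add: zp_simps)
qed

lemma sb_lin: "s_beta = lin mB"
proof
  fix l :: lat
  obtain a b where l: "l = (a, b)" by (cases l)
  obtain a1 a2 where a: "a = (a1, a2)" by (cases a)
  obtain b1 b2 where b: "b = (b1, b2)" by (cases b)
  show "s_beta l = lin mB l" unfolding l a b mB_def lin_apply s_beta_def by (simp add: zp_simps)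
qed

lemma inv_lin: assumes "mmul M N = mI" "mmul N M = mI" shows "inv (lin M) = lin N"
proof (rule inv_unique_comp)
  show "lin M \<circ> lin N = id" using assms by (simp add: lin_comp lin_I)
  show "lin N \<circ> lin M = id" using assms by (simp add: lin_comp lin_I)
qed

lemma inv_lin_adj: "mmul M (madj M) = mI \<Longrightarrow> mmul (madj M) M = mI \<Longrightarrow> inv (lin M) = lin (madj M)"
  by (rule inv_lin)

lemma bij_lin: "mmul M N = mI \<Longrightarrow> mmul N M = mI \<Longrightarrow> bij (lin M)"
proof -
  assume "mmul M N = mI" "mmul N M = mI"
  hence "lin N \<circ> lin M = id" "lin M \<circ> lin N = id" by (simp_all add: lin_comp lin_I)
  thus ?thesis using o_bij by blast
qed

lemmas grp_simps = lin_comp lin_comp2 sa_lin sb_lin lin_eq mmul_simp zp_simps mI_def mA_def mB_def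
  madj_def mdet_def lin_apply

lemma Wlist_lin: "Wlist = [lin (((1, 0), (0, 0)), ((0, 0), (1, 0))),
     lin (((-1, 0), (0, 1)), ((0, 0), (1, 0))),
     lin (((0, 1), (0, -1)), ((0, 1), (-1, 0))),
     lin (((0, -1), (1, 0)), ((0, -1), (0, 1))),
     lin (((0, 0), (-1, 0)), ((1, 0), (0, -1))),
     lin (((0, 0), (-1, 0)), ((-1, 0), (0, 0))),
     lin (((1, 0), (0, 0)), ((0, 1), (-1, 0))),
     lin (((-1, 0), (0, 1)), ((0, -1), (0, 1))),
     lin (((0, 1), (0, -1)), ((1, 0), (0, -1))),
     lin (((0, -1), (1, 0)), ((-1, 0), (0, 0)))]"
  unfolding Wlist_def
  by (simp add: upt_rec numeral_eq_Suc sa_lin sb_lin lin_comp lin_comp2 mmul_simp zp_simps mA_def mB_def lin_I mI_def)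


lemma goodw_lin: assumes "mmul M (madj M) = mI" "mmul (madj M) M = mI" "lin M ` roots \<subseteq> roots"
  shows "goodw (lin M)"
proof -
  have b: "bij (lin M)" using bij_lin assms by blast
  have "lin M ` roots = roots"
    using endo_inj_surj[OF finite_roots assms(3)] b bij_is_inj inj_on_subset by blast
  thus ?thesis using b goodw_def by blast
qed

lemma roots_explicit: "roots = {((-1, 0), (0, -1)), ((-1, 0), (0, 0)), ((0, -1), (-1, 0)), ((0, -1), (0, -1)), ((0, 0), (-1, 0)), ((0, 0), (1, 0)), ((0, 1), (0, 1)), ((0, 1), (1, 0)), ((1, 0), (0, 0)), ((1, 0), (0, 1))}"
  unfolding roots_def Wgrp_def Wlist_lin by (simp add: alpha_def beta_def lin_apply zp_simps insert_commute)

lemma gw0: "goodw (lin (((1, 0), (0, 0)), ((0, 0), (1, 0))))"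
  by (rule goodw_lin; simp add: madj_def mdet_def mmul_simp zp_simps mI_def roots_explicit lin_apply)
lemma gw1: "goodw (lin (((-1, 0), (0, 1)), ((0, 0), (1, 0))))"
  by (rule goodw_lin; simp add: madj_def mdet_def mmul_simp zp_simps mI_def roots_explicit lin_apply)
lemma gw2: "goodw (lin (((0, 1), (0, -1)), ((0, 1), (-1, 0))))"
  by (rule goodw_lin; simp add: madj_def mdet_def mmul_simp zp_simps mI_def roots_explicit lin_apply)
lemma gw3: "goodw (lin (((0, -1), (1, 0)), ((0, -1), (0, 1))))"
  by (rule goodw_lin; simp add: madj_def mdet_def mmul_simp zp_simps mI_def roots_explicit lin_apply)
lemma gw4: "goodw (lin (((0, 0), (-1, 0)), ((1, 0), (0, -1))))"
  by (rule goodw_lin; simp add: madj_def mdet_def mmul_simp zp_simps mI_def roots_explicit lin_apply)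
lemma gw5: "goodw (lin (((0, 0), (-1, 0)), ((-1, 0), (0, 0))))"
  by (rule goodw_lin; simp add: madj_def mdet_def mmul_simp zp_simps mI_def roots_explicit lin_apply)
lemma gw6: "goodw (lin (((1, 0), (0, 0)), ((0, 1), (-1, 0))))"
  by (rule goodw_lin; simp add: madj_def mdet_def mmul_simp zp_simps mI_def roots_explicit lin_apply)
lemma gw7: "goodw (lin (((-1, 0), (0, 1)), ((0, -1), (0, 1))))"
  by (rule goodw_lin; simp add: madj_def mdet_def mmul_simp zp_simps mI_def roots_explicit lin_apply)
lemma gw8: "goodw (lin (((0, 1), (0, -1)), ((1, 0), (0, -1))))"
  by (rule goodw_lin; simp add: madj_def mdet_def mmul_simp zp_simps mI_def roots_explicit lin_apply)
lemma gw9: "goodw (lin (((0, -1), (1, 0)), ((-1, 0), (0, 0))))"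
  by (rule goodw_lin; simp add: madj_def mdet_def mmul_simp zp_simps mI_def roots_explicit lin_apply)

lemmas gws = gw0 gw1 gw2 gw3 gw4 gw5 gw6 gw7 gw8 gw9

lemma goodW: "\<forall>w\<in>set Wlist. goodw w"
  by (simp add: Wlist_lin gws)

lemma goodW': "w \<in> Wgrp \<Longrightarrow> goodw w"
  using goodW Wgrp_def by blast

lemma alpha_root: "alpha \<in> roots" and beta_root: "beta \<in> roots"
  by (simp_all add: roots_explicit alpha_def beta_def)

lemma lact_id: "lact id z = z"
proof -
  have g: "goodw id" by (simp add: goodw_def)
  obtain f e where z: "z = abs_Lc (f, e)" using abs_surj by blast
  have "csact id f = f" unfolding csact_def by (simp add: ser_act_def Rep_cs_inverse)
  thus ?thesis unfolding z lact_abs[OF g] by simp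
qed

definition qwok :: "'a::comm_ring_1 qw \<Rightarrow> bool" where "qwok P \<longleftrightarrow> (\<forall>v. qrep_ok (P v))"

lemma qwok_delta: "qwok (qw_delta w)"
  by (simp add: qwok_def qw_delta_def ok_qone ok_qzero)

lemma qwok_X: "g \<in> roots \<Longrightarrow> qwok (qw_X g s)"
  by (simp add: qwok_def qw_X_def qw_smul_def qw_sub_def qw_delta_def ok_qmul ok_qy ok_qsub ok_qone ok_qzero)

lemma qwok_mul: assumes "qwok P" "qwok P'" shows "qwok (qw_mul P P')"
  unfolding qwok_def qw_mul_def
  using assms goodW unfolding qwok_def by (auto intro!: ok_qsum ok_qmul ok_qact)

lemma qwok_XA: "qwok X_alpha" and qwok_XB: "qwok X_beta"
  by (simp_all add: X_alpha_def X_beta_def qwok_X alpha_root beta_root)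

lemma qwok_Xalt: "qwok A \<Longrightarrow> qwok B \<Longrightarrow> qwok (Xalt A B k)"
  by (induction k arbitrary: A B) (simp_all add: qwok_delta qwok_mul)

lemma ok_Xalt: "qrep_ok (Xalt X_alpha X_beta k v)" "qrep_ok (Xalt X_beta X_alpha k v)"
  using qwok_Xalt qwok_XA qwok_XB unfolding qwok_def by blast+

lemma labs_delta: "labs (qw_delta w v) = (if v = w then 1 else 0)"
  by (simp add: qw_delta_def labs_qone labs_qzero)

lemma labs_qwX: "g \<in> roots \<Longrightarrow> labs (qw_X g s v) = Yv g * ((if v = id then 1 else 0) - (if v = s then 1 else 0))"
  by (simp add: qw_X_def qw_smul_def qw_sub_def labs_qmul labs_qsub ok_qy ok_qsub qwok_delta[unfolded qwok_def] labs_delta Yv_def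
       del: qw_delta_def)

lemma labs_qwmul: assumes "qwok P" "qwok P'"
  shows "labs (qw_mul P P' u) = sum_list (map (\<lambda>w. labs (P w) * lact w (labs (P' (inv w \<circ> u)))) Wlist)"
proof -
  have ok: "\<forall>x\<in>set (map (\<lambda>w. qmul (P w) (qact w (P' (inv w \<circ> u)))) Wlist). qrep_ok x"
    using assms goodW unfolding qwok_def by (auto intro!: ok_qmul ok_qact)
  show ?thesis unfolding qw_mul_def labs_qsum[OF ok] map_map
  proof (rule arg_cong[where f = sum_list], rule map_cong[OF refl])
    fix w assume "w \<in> set Wlist"
    hence "goodw w" using goodW by blast
    thus "(labs \<circ> (\<lambda>w. qmul (P w) (qact w (P' (inv w \<circ> u))))) w = labs (P w) * lact w (labs (P' (inv w \<circ> u)))"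
      using assms unfolding qwok_def by (simp add: labs_qmul labs_qact ok_qact)
  qed
qed

lemma sum_two:
  assumes "distinct xs" "a \<in> set xs" "b \<in> set xs" "a \<noteq> b" "\<forall>w\<in>set xs. w \<noteq> a \<and> w \<noteq> b \<longrightarrow> f w = 0"
  shows "sum_list (map f xs) = f a + (f b :: 'b::comm_monoid_add)"
proof -
  have "sum_list (map f xs) = sum f (set xs)" using assms(1) by (simp add: sum_list_distinct_conv_sum_set)
  also have "\<dots> = sum f {a, b}" using assms by (intro sum.mono_neutral_right) auto
  also have "\<dots> = f a + f b" using assms(4) by simp
  finally show ?thesis .
qed

lemma distinct_W: "distinct Wlist"
  by (simp add: Wlist_lin lin_eq)

lemma id_in_W: "id \<in> set Wlist" by (simp add: Wlist_lin lin_I mI_def)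
lemma sa_in_W: "s_alpha \<in> set Wlist" by (simp add: Wlist_lin sa_lin mA_def lin_eq)
lemma sb_in_W: "s_beta \<in> set Wlist" by (simp add: Wlist_lin sb_lin mB_def lin_eq)
lemma sa_ne_id: "s_alpha \<noteq> id" by (simp add: sa_lin lin_I lin_eq mA_def mI_def)
lemma sb_ne_id: "s_beta \<noteq> id" by (simp add: sb_lin lin_I lin_eq mB_def mI_def)

lemma inv_sa: "inv s_alpha = s_alpha"
  by (simp add: sa_lin mA_def inv_lin mmul_simp zp_simps mI_def)
lemma inv_sb: "inv s_beta = s_beta"
  by (simp add: sb_lin mB_def inv_lin mmul_simp zp_simps mI_def)

lemma rec_gen:
  assumes g: "g \<in> roots" and s: "s \<in> set Wlist" "s \<noteq> id" "inv s = s" and B: "qwok B"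
  shows "labs (qw_mul (qw_X g s) B u) = Yv g * labs (B u) - Yv g * lact s (labs (B (s \<circ> u)))"
proof -
  have "labs (qw_mul (qw_X g s) B u) = sum_list (map (\<lambda>w. labs (qw_X g s w) * lact w (labs (B (inv w \<circ> u)))) Wlist)"
    using labs_qwmul[OF qwok_X[OF g] B] .
  also have "\<dots> = labs (qw_X g s id) * lact id (labs (B (inv id \<circ> u))) + labs (qw_X g s s) * lact s (labs (B (inv s \<circ> u)))"
    using s distinct_W id_in_W by (intro sum_two) (auto simp: labs_qwX[OF g])
  also have "\<dots> = Yv g * labs (B u) - Yv g * lact s (labs (B (s \<circ> u)))"
    using s by (simp add: labs_qwX[OF g] lact_id)
  finally show ?thesis .
qed

lemma rec_A: "labs (Xalt X_alpha X_beta (Suc k) u) =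
   Yv alpha * labs (Xalt X_beta X_alpha k u) - Yv alpha * lact s_alpha (labs (Xalt X_beta X_alpha k (s_alpha \<circ> u)))"
  using rec_gen[OF alpha_root sa_in_W sa_ne_id inv_sa qwok_Xalt[OF qwok_XB qwok_XA]] by (simp add: X_alpha_def)

lemma rec_B: "labs (Xalt X_beta X_alpha (Suc k) u) =
   Yv beta * labs (Xalt X_alpha X_beta k u) - Yv beta * lact s_beta (labs (Xalt X_alpha X_beta k (s_beta \<circ> u)))"
  using rec_gen[OF beta_root sb_in_W sb_ne_id inv_sb qwok_Xalt[OF qwok_XA qwok_XB]] by (simp add: X_beta_def)

lemma rec_0: "labs (Xalt A B 0 u) = (if u = id then 1 else 0)"
  by (simp add: labs_delta)


lemmas csimps[no_atp] = rec_A rec_B rec_0 numeral_eq_Suc sa_lin sb_lin mA_def mB_def lin_comp mmul_simp zp_simps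
  lin_I mI_def lin_eq lact_add lact_mul lact_diff lact_neg lact_one lact_zero gws lact_Y roots_explicit alpha_def beta_def lin_apply

definition XA :: "nat \<Rightarrow> (lat \<Rightarrow> lat) \<Rightarrow> 'a::comm_ring_1 Lc" where "XA i u = labs (Xalt X_alpha X_beta i u)"
definition XB :: "nat \<Rightarrow> (lat \<Rightarrow> lat) \<Rightarrow> 'a::comm_ring_1 Lc" where "XB i u = labs (Xalt X_beta X_alpha i u)"

definition S03_alpha :: "'a::comm_ring_1 qrep \<Rightarrow> 'a qrep" where
  "S03_alpha u = qsum (map (\<lambda>k. qact (saw k) u) [0..<4])"

definition ka0 :: "nat \<Rightarrow> 'a::comm_ring_1 qrep" where
  "ka0 i = (if i = 3 then qsub (S03_alpha yab) (qmul (qy beta) (qact (saw 3) (qy beta)))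
     else if i = 2 then
         (qneg (qmul (qy beta)
            (qsub (qadd (qsub (qsub (qadd (qact (saw 1) yab) (qact (saw 2) yab))
                                    (qact (sbw 2) yab))
                              (qact (sbw 3) yab))
                        (qmul (qy alpha) (qact (sbw 3) (qy alpha))))
                  (qmul (qact (saw 2) (qy alpha)) (qact (saw 3) (qy beta))))))
     else
         (qsub (qsub
            (qneg (qmul (qmul (qact (saw 1) yab) (qact (saw 3) (qy beta)))
                        (qsub (qact (saw 3) (qy alpha)) (qy beta))))
            (qmul (qmul yab (qact (sbw 2) (qy beta)))
                  (qsub (qact (sbw 2) (qy alpha)) (qact (sbw 3) (qy alpha)))))
            (qmul (qmul (qmul (qy beta) (qact (saw 1) (qy beta))) (qact (saw 2) (qy alpha)))
                  (qact (saw 3) (qy beta)))))"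

definition kb0 :: "nat \<Rightarrow> 'a::comm_ring_1 qrep" where
  "kb0 i = (if i = 3 then qsub (S03_beta yab) (qmul (qy alpha) (qact (sbw 3) (qy alpha)))
     else if i = 2 then
         (qneg (qmul (qy alpha)
            (qsub (qadd (qsub (qsub (qadd (qact (sbw 1) yab) (qact (sbw 2) yab))
                                    (qact (saw 2) yab))
                              (qact (saw 3) yab))
                        (qmul (qy beta) (qact (saw 3) (qy beta))))
                  (qmul (qact (sbw 2) (qy beta)) (qact (sbw 3) (qy alpha))))))
     else
         (qsub (qsub
            (qneg (qmul (qmul (qact (sbw 1) yab) (qact (sbw 3) (qy alpha)))
                        (qsub (qact (sbw 3) (qy beta)) (qy alpha))))
            (qmul (qmul yab (qact (saw 2) (qy alpha)))
                  (qsub (qact (saw 2) (qy beta)) (qact (saw 3) (qy beta)))))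
            (qmul (qmul (qmul (qy alpha) (qact (sbw 1) (qy alpha))) (qact (sbw 2) (qy beta)))
                  (qact (sbw 3) (qy alpha)))))"

lemmas ksimps[no_atp] = ka0_def kb0_def S03_alpha_def S03_beta_def yab_def saw_def sbw_def alt.simps
  labs_qsub labs_qadd labs_qmul labs_qneg labs_qact labs_qsum ok_qsub ok_qadd ok_qmul ok_qneg ok_qact ok_qy ok_qsum
  qact_qy Yv_def[symmetric] upt_rec

definition Rs :: "(nat \<Rightarrow> 'a::comm_ring_1 Lc) \<Rightarrow> (nat \<Rightarrow> 'a Lc) \<Rightarrow> (lat \<Rightarrow> lat) \<Rightarrow> 'a Lc" where
  "Rs K1 K2 u = (K1 1 * XA 1 u - K2 1 * XB 1 u) + ((K1 2 * XA 2 u - K2 2 * XB 2 u) + ((K1 3 * XA 3 u - K2 3 * XB 3 u) + 0))"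

lemma ex0: "XA 5 (lin (((1, 0), (0, 0)), ((0, 0), (1, 0)))) - XB 5 (lin (((1, 0), (0, 0)), ((0, 0), (1, 0)))) = Rs (\<lambda>i. labs (ka0 i)) (\<lambda>i. labs (kb0 i)) (lin (((1, 0), (0, 0)), ((0, 0), (1, 0))))"
  by (simp add: Rs_def ksimps csimps XA_def XB_def del: Xalt.simps, (simp add: algebra_simps)?)

lemma ex1: "XA 5 (lin (((-1, 0), (0, 1)), ((0, 0), (1, 0)))) - XB 5 (lin (((-1, 0), (0, 1)), ((0, 0), (1, 0)))) = Rs (\<lambda>i. labs (ka0 i)) (\<lambda>i. labs (kb0 i)) (lin (((-1, 0), (0, 1)), ((0, 0), (1, 0))))"
  by (simp add: Rs_def ksimps csimps XA_def XB_def del: Xalt.simps, (simp add: algebra_simps)?)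

lemma ex2: "XA 5 (lin (((0, 1), (0, -1)), ((0, 1), (-1, 0)))) - XB 5 (lin (((0, 1), (0, -1)), ((0, 1), (-1, 0)))) = Rs (\<lambda>i. labs (ka0 i)) (\<lambda>i. labs (kb0 i)) (lin (((0, 1), (0, -1)), ((0, 1), (-1, 0))))"
  by (simp add: Rs_def ksimps csimps XA_def XB_def del: Xalt.simps, (simp add: algebra_simps)?)

lemma ex3: "XA 5 (lin (((0, -1), (1, 0)), ((0, -1), (0, 1)))) - XB 5 (lin (((0, -1), (1, 0)), ((0, -1), (0, 1)))) = Rs (\<lambda>i. labs (ka0 i)) (\<lambda>i. labs (kb0 i)) (lin (((0, -1), (1, 0)), ((0, -1), (0, 1))))"
  by (simp add: Rs_def ksimps csimps XA_def XB_def del: Xalt.simps, (simp add: algebra_simps)?)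

lemma ex4: "XA 5 (lin (((0, 0), (-1, 0)), ((1, 0), (0, -1)))) - XB 5 (lin (((0, 0), (-1, 0)), ((1, 0), (0, -1)))) = Rs (\<lambda>i. labs (ka0 i)) (\<lambda>i. labs (kb0 i)) (lin (((0, 0), (-1, 0)), ((1, 0), (0, -1))))"
  by (simp add: Rs_def ksimps csimps XA_def XB_def del: Xalt.simps, (simp add: algebra_simps)?)

lemma ex5: "XA 5 (lin (((0, 0), (-1, 0)), ((-1, 0), (0, 0)))) - XB 5 (lin (((0, 0), (-1, 0)), ((-1, 0), (0, 0)))) = Rs (\<lambda>i. labs (ka0 i)) (\<lambda>i. labs (kb0 i)) (lin (((0, 0), (-1, 0)), ((-1, 0), (0, 0))))"
  by (simp add: Rs_def ksimps csimps XA_def XB_def del: Xalt.simps, (simp add: algebra_simps)?)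

lemma ex6: "XA 5 (lin (((1, 0), (0, 0)), ((0, 1), (-1, 0)))) - XB 5 (lin (((1, 0), (0, 0)), ((0, 1), (-1, 0)))) = Rs (\<lambda>i. labs (ka0 i)) (\<lambda>i. labs (kb0 i)) (lin (((1, 0), (0, 0)), ((0, 1), (-1, 0))))"
  by (simp add: Rs_def ksimps csimps XA_def XB_def del: Xalt.simps, (simp add: algebra_simps)?)

lemma ex7: "XA 5 (lin (((-1, 0), (0, 1)), ((0, -1), (0, 1)))) - XB 5 (lin (((-1, 0), (0, 1)), ((0, -1), (0, 1)))) = Rs (\<lambda>i. labs (ka0 i)) (\<lambda>i. labs (kb0 i)) (lin (((-1, 0), (0, 1)), ((0, -1), (0, 1))))"
  by (simp add: Rs_def ksimps csimps XA_def XB_def del: Xalt.simps, (simp add: algebra_simps)?)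

lemma ex8: "XA 5 (lin (((0, 1), (0, -1)), ((1, 0), (0, -1)))) - XB 5 (lin (((0, 1), (0, -1)), ((1, 0), (0, -1)))) = Rs (\<lambda>i. labs (ka0 i)) (\<lambda>i. labs (kb0 i)) (lin (((0, 1), (0, -1)), ((1, 0), (0, -1))))"
  by (simp add: Rs_def ksimps csimps XA_def XB_def del: Xalt.simps, (simp add: algebra_simps)?)

lemma ex9: "XA 5 (lin (((0, -1), (1, 0)), ((-1, 0), (0, 0)))) - XB 5 (lin (((0, -1), (1, 0)), ((-1, 0), (0, 0)))) = Rs (\<lambda>i. labs (ka0 i)) (\<lambda>i. labs (kb0 i)) (lin (((0, -1), (1, 0)), ((-1, 0), (0, 0))))"
  by (simp add: Rs_def ksimps csimps XA_def XB_def del: Xalt.simps, (simp add: algebra_simps)?)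

lemma exist_eq: "\<forall>u\<in>set Wlist. XA 5 u - XB 5 u = Rs (\<lambda>i. labs (ka0 i)) (\<lambda>i. labs (kb0 i)) u"
  unfolding Wlist_lin using ex0 ex1 ex2 ex3 ex4 ex5 ex6 ex7 ex8 ex9 by simp


lemma goodw_saw: "k < 6 \<Longrightarrow> goodw (saw k)"
  using goodW by (simp add: Wlist_def saw_def)

lemma goodw_sbw: "k < 5 \<Longrightarrow> goodw (sbw k)"
proof (cases k)
  case 0 thus ?thesis using goodw_saw[of 0] by (simp add: saw_def sbw_def)
next
  case (Suc j)
  assume "k < 5"
  hence "k \<in> {Suc 0..<5}" using Suc by auto
  hence "alt s_beta s_alpha k \<in> alt s_beta s_alpha ` {Suc 0..<5}" by (rule imageI)
  hence "sbw k \<in> set Wlist" unfolding Wlist_def sbw_def by (simp del: alt.simps)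
  thus ?thesis using goodW by blast
qed

lemmas oksimps = ok_qsub ok_qadd ok_qmul ok_qneg ok_qact ok_qy ok_qsum alpha_root beta_root goodw_saw goodw_sbw

lemma ok_ka0: "qrep_ok (ka0 i)"
  unfolding ka0_def S03_alpha_def yab_def by (simp add: oksimps)
lemma ok_kb0: "qrep_ok (kb0 i)"
  unfolding kb0_def S03_beta_def yab_def by (simp add: oksimps)

lemma qwsum_app: "qw_sum xs u = qsum (map (\<lambda>P. P u) xs)"
  by (induction xs) (simp_all add: qw_sum_def qsum_def qw_add_def qw_zero_def)

lemma rhs_eval:
  fixes u :: "lat \<Rightarrow> lat"
  assumes ok: "\<forall>i\<in>{1..3}. qrep_ok (kab i) \<and> qrep_ok (kba i)"
  defines "P \<equiv> (\<lambda>i. qsub (qmul (kab i) (Xalt X_alpha X_beta i u)) (qmul (kba i) (Xalt X_beta X_alpha i u)))"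
  shows "qw_sum (map (\<lambda>i. qw_sub (qw_smul (kab i) (Xalt X_alpha X_beta i)) (qw_smul (kba i) (Xalt X_beta X_alpha i))) [1..<4]) u
         = qsum [P 1, P 2, P 3]"
    and "\<forall>i\<in>{1..3}. qrep_ok (P i)"
    and "\<forall>i\<in>{1..3}. labs (P i) = labs (kab i) * XA i u - labs (kba i) * XB i u"
proof -
  have e: "[1..<4] = [1, 2, 3::nat]" by (simp add: upt_rec)
  show "qw_sum (map (\<lambda>i. qw_sub (qw_smul (kab i) (Xalt X_alpha X_beta i)) (qw_smul (kba i) (Xalt X_beta X_alpha i))) [1..<4]) u
         = qsum [P 1, P 2, P 3]"
    unfolding qwsum_app e by (simp add: qw_sub_def qw_smul_def P_def)
  show "\<forall>i\<in>{1..3}. qrep_ok (P i)" using ok unfolding P_def by (simp add: ok_qsub ok_qmul ok_Xalt)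
  show "\<forall>i\<in>{1..3}. labs (P i) = labs (kab i) * XA i u - labs (kba i) * XB i u"
    using ok unfolding P_def by (simp add: ok_qsub ok_qmul ok_Xalt labs_qsub labs_qmul XA_def XB_def)
qed

lemma kid_iff:
  assumes ok: "\<forall>i\<in>{1..3}. qrep_ok (kab i) \<and> qrep_ok (kba i)"
  shows "kappa_identity ph F kab kba \<longleftrightarrow>
    (\<forall>u\<in>set Wlist. inI ph F (XA 5 u - XB 5 u - Rs (\<lambda>i. labs (kab i)) (\<lambda>i. labs (kba i)) u))"
proof -
  have "qeq ph F (qw_sub (Xalt X_alpha X_beta 5) (Xalt X_beta X_alpha 5) u)
          (qw_sum (map (\<lambda>i. qw_sub (qw_smul (kab i) (Xalt X_alpha X_beta i)) (qw_smul (kba i) (Xalt X_beta X_alpha i))) [1..<4]) u)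
     \<longleftrightarrow> inI ph F (XA 5 u - XB 5 u - Rs (\<lambda>i. labs (kab i)) (\<lambda>i. labs (kba i)) u)" for u
  proof -
    let ?P = "(\<lambda>i. qsub (qmul (kab i) (Xalt X_alpha X_beta i u)) (qmul (kba i) (Xalt X_beta X_alpha i u)))"
    note r = rhs_eval[OF ok, of u]
    have okl: "\<forall>x\<in>set [?P 1, ?P 2, ?P 3]. qrep_ok x" using r(2) by (simp del: Xalt.simps)
    have lr: "labs (qsum [?P 1, ?P 2, ?P 3]) = Rs (\<lambda>i. labs (kab i)) (\<lambda>i. labs (kba i)) u"
      unfolding labs_qsum[OF okl] using r(3) by (simp add: Rs_def del: Xalt.simps)
    have ll: "labs (qw_sub (Xalt X_alpha X_beta 5) (Xalt X_beta X_alpha 5) u) = XA 5 u - XB 5 u"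
      by (simp add: qw_sub_def labs_qsub ok_Xalt XA_def XB_def)
    have ok1: "qrep_ok (qw_sub (Xalt X_alpha X_beta 5) (Xalt X_beta X_alpha 5) u)"
      by (simp add: qw_sub_def ok_qsub ok_Xalt)
    have ok2: "qrep_ok (qsum [?P 1, ?P 2, ?P 3])" using ok_qsum[OF okl] .
    show ?thesis unfolding r(1) qeq_iff[OF ok1 ok2] ll lr ..
  qed
  thus ?thesis unfolding kappa_identity_def qw_eq_def Wgrp_def by blast
qed

lemma ustep: "inI ph F (d * a + r) \<Longrightarrow> inI ph F r \<Longrightarrow> c * a = 1 \<Longrightarrow> inI ph F d"
proof -
  assume h1: "inI ph F (d * a + r)" and h2: "inI ph F r" and c: "c * a = 1"
  have "d = c * (d * a + r) - c * r" using c by (simp add: algebra_simps) (metis mult.assoc mult.commute mult_1)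
  thus ?thesis using inI_diff[OF inI_mul[OF h1] inI_mul[OF h2]] by metis
qed

lemma inI_mulr: "inI ph F a \<Longrightarrow> inI ph F (a * c)"
  by (metis inI_mul mult.commute)

lemma pr1: "x1 * y1 = 1 \<Longrightarrow> x1 * y1 = (1::'r::comm_ring_1)" by simp
lemma pr2: "x1 * y1 = 1 \<Longrightarrow> x2 * y2 = 1 \<Longrightarrow> (x1 * x2) * (y1 * y2) = (1::'r::comm_ring_1)"
proof -
  assume "x1 * y1 = 1" "x2 * y2 = 1"
  moreover have "(x1 * x2) * (y1 * y2) = (x1 * y1) * (x2 * y2)" by (simp add: ac_simps)
  ultimately show ?thesis by simp
qed
lemma pr3: "x1 * y1 = 1 \<Longrightarrow> x2 * y2 = 1 \<Longrightarrow> x3 * y3 = 1 \<Longrightarrow> (x1 * (x2 * x3)) * (y1 * (y2 * y3)) = (1::'r::comm_ring_1)"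
proof -
  assume "x1 * y1 = 1" "x2 * y2 = 1" "x3 * y3 = 1"
  moreover have "(x1 * (x2 * x3)) * (y1 * (y2 * y3)) = (x1 * y1) * ((x2 * y2) * (x3 * y3))" by (simp add: ac_simps)
  ultimately show ?thesis by simp
qed

lemma z_A1_3: "XA 1 (lin (((0, -1), (1, 0)), ((0, -1), (0, 1)))) = 0"
  by (simp add: csimps XA_def del: Xalt.simps)
lemma z_A2_3: "XA 2 (lin (((0, -1), (1, 0)), ((0, -1), (0, 1)))) = 0"
  by (simp add: csimps XA_def del: Xalt.simps)
lemma z_B1_3: "XB 1 (lin (((0, -1), (1, 0)), ((0, -1), (0, 1)))) = 0"
  by (simp add: csimps XB_def del: Xalt.simps)
lemma z_B2_3: "XB 2 (lin (((0, -1), (1, 0)), ((0, -1), (0, 1)))) = 0"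
  by (simp add: csimps XB_def del: Xalt.simps)
lemma z_B3_3: "XB 3 (lin (((0, -1), (1, 0)), ((0, -1), (0, 1)))) = 0"
  by (simp add: csimps XB_def del: Xalt.simps)
lemma z_A1_8: "XA 1 (lin (((0, 1), (0, -1)), ((1, 0), (0, -1)))) = 0"
  by (simp add: csimps XA_def del: Xalt.simps)
lemma z_A2_8: "XA 2 (lin (((0, 1), (0, -1)), ((1, 0), (0, -1)))) = 0"
  by (simp add: csimps XA_def del: Xalt.simps)
lemma z_A3_8: "XA 3 (lin (((0, 1), (0, -1)), ((1, 0), (0, -1)))) = 0"
  by (simp add: csimps XA_def del: Xalt.simps)
lemma z_B1_8: "XB 1 (lin (((0, 1), (0, -1)), ((1, 0), (0, -1)))) = 0"
  by (simp add: csimps XB_def del: Xalt.simps)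
lemma z_B2_8: "XB 2 (lin (((0, 1), (0, -1)), ((1, 0), (0, -1)))) = 0"
  by (simp add: csimps XB_def del: Xalt.simps)
lemma z_A1_2: "XA 1 (lin (((0, 1), (0, -1)), ((0, 1), (-1, 0)))) = 0"
  by (simp add: csimps XA_def del: Xalt.simps)
lemma z_B1_2: "XB 1 (lin (((0, 1), (0, -1)), ((0, 1), (-1, 0)))) = 0"
  by (simp add: csimps XB_def del: Xalt.simps)
lemma z_B2_2: "XB 2 (lin (((0, 1), (0, -1)), ((0, 1), (-1, 0)))) = 0"
  by (simp add: csimps XB_def del: Xalt.simps)
lemma z_A1_7: "XA 1 (lin (((-1, 0), (0, 1)), ((0, -1), (0, 1)))) = 0"
  by (simp add: csimps XA_def del: Xalt.simps)
lemma z_A2_7: "XA 2 (lin (((-1, 0), (0, 1)), ((0, -1), (0, 1)))) = 0"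
  by (simp add: csimps XA_def del: Xalt.simps)
lemma z_B1_7: "XB 1 (lin (((-1, 0), (0, 1)), ((0, -1), (0, 1)))) = 0"
  by (simp add: csimps XB_def del: Xalt.simps)
lemma z_B1_1: "XB 1 (lin (((-1, 0), (0, 1)), ((0, 0), (1, 0)))) = 0"
  by (simp add: csimps XB_def del: Xalt.simps)
lemma z_A1_6: "XA 1 (lin (((1, 0), (0, 0)), ((0, 1), (-1, 0)))) = 0"
  by (simp add: csimps XA_def del: Xalt.simps)
lemma v_A1: "XA 1 (lin (((-1, 0), (0, 1)), ((0, 0), (1, 0)))) = - Yv ((1, 0), (0, 0))"
  by (simp add: csimps XA_def del: Xalt.simps)
lemma lead_A1: "(- Xv ((1, 0), (0, 0))) * XA 1 (lin (((-1, 0), (0, 1)), ((0, 0), (1, 0)))) = (1::'a::comm_ring_1 Lc)"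
proof -
  have xy0: "Xv ((1, 0), (0, 0)) * Yv ((1, 0), (0, 0)) = (1::'a Lc)" by (rule XY) (simp add: roots_explicit)
  show ?thesis unfolding v_A1 using xy0 by (simp add: pr1 pr2 pr3)
qed
lemma v_B1: "XB 1 (lin (((1, 0), (0, 0)), ((0, 1), (-1, 0)))) = - Yv ((0, 0), (1, 0))"
  by (simp add: csimps XB_def del: Xalt.simps)
lemma lead_B1: "(Xv ((0, 0), (1, 0))) * (- XB 1 (lin (((1, 0), (0, 0)), ((0, 1), (-1, 0))))) = (1::'a::comm_ring_1 Lc)"
proof -
  have xy0: "Xv ((0, 0), (1, 0)) * Yv ((0, 0), (1, 0)) = (1::'a Lc)" by (rule XY) (simp add: roots_explicit)
  show ?thesis unfolding v_B1 using xy0 by (simp add: pr1 pr2 pr3)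
qed
lemma v_A2: "XA 2 (lin (((0, 1), (0, -1)), ((0, 1), (-1, 0)))) = Yv ((1, 0), (0, 0)) * Yv ((0, 1), (1, 0))"
  by (simp add: csimps XA_def del: Xalt.simps)
lemma lead_A2: "(Xv ((1, 0), (0, 0)) * Xv ((0, 1), (1, 0))) * XA 2 (lin (((0, 1), (0, -1)), ((0, 1), (-1, 0)))) = (1::'a::comm_ring_1 Lc)"
proof -
  have xy0: "Xv ((1, 0), (0, 0)) * Yv ((1, 0), (0, 0)) = (1::'a Lc)" by (rule XY) (simp add: roots_explicit)
  have xy1: "Xv ((0, 1), (1, 0)) * Yv ((0, 1), (1, 0)) = (1::'a Lc)" by (rule XY) (simp add: roots_explicit)
  show ?thesis unfolding v_A2 using xy0 xy1 by (simp add: pr1 pr2 pr3)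
qed
lemma v_B2: "XB 2 (lin (((-1, 0), (0, 1)), ((0, -1), (0, 1)))) = Yv ((0, 0), (1, 0)) * Yv ((1, 0), (0, 1))"
  by (simp add: csimps XB_def del: Xalt.simps)
lemma lead_B2: "(- (Xv ((0, 0), (1, 0)) * Xv ((1, 0), (0, 1)))) * (- XB 2 (lin (((-1, 0), (0, 1)), ((0, -1), (0, 1))))) = (1::'a::comm_ring_1 Lc)"
proof -
  have xy0: "Xv ((0, 0), (1, 0)) * Yv ((0, 0), (1, 0)) = (1::'a Lc)" by (rule XY) (simp add: roots_explicit)
  have xy1: "Xv ((1, 0), (0, 1)) * Yv ((1, 0), (0, 1)) = (1::'a Lc)" by (rule XY) (simp add: roots_explicit)
  show ?thesis unfolding v_B2 using xy0 xy1 by (simp add: pr1 pr2 pr3)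
qed
lemma v_A3: "XA 3 (lin (((0, -1), (1, 0)), ((0, -1), (0, 1)))) = - (Yv ((1, 0), (0, 0)) * (Yv ((0, 1), (1, 0)) * Yv ((0, 1), (0, 1))))"
  by (simp add: csimps XA_def del: Xalt.simps)
lemma lead_A3: "(- (Xv ((1, 0), (0, 0)) * (Xv ((0, 1), (1, 0)) * Xv ((0, 1), (0, 1))))) * XA 3 (lin (((0, -1), (1, 0)), ((0, -1), (0, 1)))) = (1::'a::comm_ring_1 Lc)"
proof -
  have xy0: "Xv ((1, 0), (0, 0)) * Yv ((1, 0), (0, 0)) = (1::'a Lc)" by (rule XY) (simp add: roots_explicit)
  have xy1: "Xv ((0, 1), (1, 0)) * Yv ((0, 1), (1, 0)) = (1::'a Lc)" by (rule XY) (simp add: roots_explicit)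
  have xy2: "Xv ((0, 1), (0, 1)) * Yv ((0, 1), (0, 1)) = (1::'a Lc)" by (rule XY) (simp add: roots_explicit)
  show ?thesis unfolding v_A3 using xy0 xy1 xy2 by (simp add: pr1 pr2 pr3)
qed
lemma v_B3: "XB 3 (lin (((0, 1), (0, -1)), ((1, 0), (0, -1)))) = - (Yv ((0, 0), (1, 0)) * (Yv ((1, 0), (0, 1)) * Yv ((0, 1), (0, 1))))"
  by (simp add: csimps XB_def del: Xalt.simps)
lemma lead_B3: "(Xv ((0, 0), (1, 0)) * (Xv ((1, 0), (0, 1)) * Xv ((0, 1), (0, 1)))) * (- XB 3 (lin (((0, 1), (0, -1)), ((1, 0), (0, -1))))) = (1::'a::comm_ring_1 Lc)"
proof -
  have xy0: "Xv ((0, 0), (1, 0)) * Yv ((0, 0), (1, 0)) = (1::'a Lc)" by (rule XY) (simp add: roots_explicit)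
  have xy1: "Xv ((1, 0), (0, 1)) * Yv ((1, 0), (0, 1)) = (1::'a Lc)" by (rule XY) (simp add: roots_explicit)
  have xy2: "Xv ((0, 1), (0, 1)) * Yv ((0, 1), (0, 1)) = (1::'a Lc)" by (rule XY) (simp add: roots_explicit)
  show ?thesis unfolding v_B3 using xy0 xy1 xy2 by (simp add: pr1 pr2 pr3)
qed

theorem mainTheorem16:
  fixes ph :: "'a::idom" and F :: "nat \<Rightarrow> nat \<Rightarrow> 'a"
  assumes R_contains_Zphi: "ph ^ 2 = ph + 1"
      and R_contains_Zphi_inj: "\<forall>a b :: int. of_int a + of_int b * ph = (0::'a) \<longrightarrow> a = 0 \<and> b = 0"
      and F_fgl: "fgl F"
  shows
   "(\<exists>kab kba. (\<forall>i\<in>{1..3}. qrep_ok (kab i) \<and> qrep_ok (kba i)) \<and> kappa_identity ph F kab kba)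
    \<and>
    (\<forall>kab kba. (\<forall>i\<in>{1..3}. qrep_ok (kab i) \<and> qrep_ok (kba i)) \<and> kappa_identity ph F kab kba \<longrightarrow>
       qeq ph F (kba 3)
         (qsub (S03_beta yab) (qmul (qy alpha) (qact (sbw 3) (qy alpha))))
     \<and> qeq ph F (kab 2)
         (qneg (qmul (qy beta)
            (qsub (qadd (qsub (qsub (qadd (qact (saw 1) yab) (qact (saw 2) yab))
                                    (qact (sbw 2) yab))
                              (qact (sbw 3) yab))
                        (qmul (qy alpha) (qact (sbw 3) (qy alpha))))
                  (qmul (qact (saw 2) (qy alpha)) (qact (saw 3) (qy beta))))))
     \<and> qeq ph F (kba 1)
         (qsub (qsub
            (qneg (qmul (qmul (qact (sbw 1) yab) (qact (sbw 3) (qy alpha)))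
                        (qsub (qact (sbw 3) (qy beta)) (qy alpha))))
            (qmul (qmul yab (qact (saw 2) (qy alpha)))
                  (qsub (qact (saw 2) (qy beta)) (qact (saw 3) (qy beta)))))
            (qmul (qmul (qmul (qy alpha) (qact (sbw 1) (qy alpha))) (qact (sbw 2) (qy beta)))
                  (qact (sbw 3) (qy alpha)))))"
proof -
  have conj1: "\<exists>kab kba. (\<forall>i\<in>{1..3}. qrep_ok (kab i) \<and> qrep_ok (kba i)) \<and> kappa_identity ph F kab kba"
  proof (intro exI conjI)
    show ok: "\<forall>i\<in>{1..3}. qrep_ok (ka0 i) \<and> qrep_ok (kb0 i)" using ok_ka0 ok_kb0 by blast
    show "kappa_identity ph F ka0 kb0" unfolding kid_iff[OF ok]
    proof
      fix u assume "u \<in> set Wlist"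
      hence e: "XA 5 u - XB 5 u = Rs (\<lambda>i. labs (ka0 i)) (\<lambda>i. labs (kb0 i)) u" using exist_eq by blast
      show "inI ph F (XA 5 u - XB 5 u - Rs (\<lambda>i. labs (ka0 i)) (\<lambda>i. labs (kb0 i)) u)"
        unfolding e using inI_zero by simp
    qed
  qed
  have conj2: "\<forall>kab kba. (\<forall>i\<in>{1..3}. qrep_ok (kab i) \<and> qrep_ok (kba i)) \<and> kappa_identity ph F kab kba \<longrightarrow>
       qeq ph F (kba 3) (kb0 3) \<and> qeq ph F (kab 2) (ka0 2) \<and> qeq ph F (kba 1) (kb0 1)"
  proof (intro allI impI)
    fix kab kba :: "nat \<Rightarrow> 'a qrep"
    assume h: "(\<forall>i\<in>{1..3}. qrep_ok (kab i) \<and> qrep_ok (kba i)) \<and> kappa_identity ph F kab kba"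
    hence ok: "\<forall>i\<in>{1..3}. qrep_ok (kab i) \<and> qrep_ok (kba i)" by blast
    have H0: "\<forall>u\<in>set Wlist. inI ph F (XA 5 u - XB 5 u - Rs (\<lambda>i. labs (kab i)) (\<lambda>i. labs (kba i)) u)"
      using h kid_iff[OF ok] by blast
    define da where "da i = labs (ka0 i) - labs (kab i)" for i
    define db where "db i = labs (kb0 i) - labs (kba i)" for i
    define D where "D u = da 1 * XA 1 u + da 2 * XA 2 u + da 3 * XA 3 u - db 1 * XB 1 u - db 2 * XB 2 u - db 3 * XB 3 u" for u
    have H: "\<forall>u\<in>set Wlist. inI ph F (D u)"
    proof
      fix u assume u: "u \<in> set Wlist"
      have e: "XA 5 u - XB 5 u = Rs (\<lambda>i. labs (ka0 i)) (\<lambda>i. labs (kb0 i)) u" using exist_eq u by blast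
      have "D u = XA 5 u - XB 5 u - Rs (\<lambda>i. labs (kab i)) (\<lambda>i. labs (kba i)) u"
        unfolding e by (simp add: D_def da_def db_def Rs_def algebra_simps del: Xalt.simps)
      thus "inI ph F (D u)" using H0 u by simp
    qed
    have sa3: "inI ph F (da 3)"
    proof -
      have "inI ph F (D (lin (((0, -1), (1, 0)), ((0, -1), (0, 1)))))" using H by (simp add: Wlist_lin del: Xalt.simps)
      moreover have "D (lin (((0, -1), (1, 0)), ((0, -1), (0, 1)))) = da 3 * XA 3 (lin (((0, -1), (1, 0)), ((0, -1), (0, 1)))) + 0" by (simp add: D_def z_A1_3 z_A1_3[unfolded One_nat_def] z_A2_3 z_B1_3 z_B1_3[unfolded One_nat_def] z_B2_3 z_B3_3 algebra_simps)
      ultimately have e1: "inI ph F (da 3 * XA 3 (lin (((0, -1), (1, 0)), ((0, -1), (0, 1)))) + 0)" by simp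
      have e2: "inI ph F 0" by (rule inI_zero)
      show ?thesis using ustep[OF e1 e2 lead_A3] .
    qed
    have sb3: "inI ph F (db 3)"
    proof -
      have "inI ph F (D (lin (((0, 1), (0, -1)), ((1, 0), (0, -1)))))" using H by (simp add: Wlist_lin del: Xalt.simps)
      moreover have "D (lin (((0, 1), (0, -1)), ((1, 0), (0, -1)))) = db 3 * (- XB 3 (lin (((0, 1), (0, -1)), ((1, 0), (0, -1))))) + 0" by (simp add: D_def z_A1_8 z_A1_8[unfolded One_nat_def] z_A2_8 z_A3_8 z_B1_8 z_B1_8[unfolded One_nat_def] z_B2_8 algebra_simps)
      ultimately have e1: "inI ph F (db 3 * (- XB 3 (lin (((0, 1), (0, -1)), ((1, 0), (0, -1))))) + 0)" by simp
      have e2: "inI ph F 0" by (rule inI_zero)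
      show ?thesis using ustep[OF e1 e2 lead_B3] .
    qed
    have sa2: "inI ph F (da 2)"
    proof -
      have "inI ph F (D (lin (((0, 1), (0, -1)), ((0, 1), (-1, 0)))))" using H by (simp add: Wlist_lin del: Xalt.simps)
      moreover have "D (lin (((0, 1), (0, -1)), ((0, 1), (-1, 0)))) = da 2 * XA 2 (lin (((0, 1), (0, -1)), ((0, 1), (-1, 0)))) + ((da 3 * XA 3 (lin (((0, 1), (0, -1)), ((0, 1), (-1, 0))))) - (db 3 * XB 3 (lin (((0, 1), (0, -1)), ((0, 1), (-1, 0))))))" by (simp add: D_def z_A1_2 z_A1_2[unfolded One_nat_def] z_B1_2 z_B1_2[unfolded One_nat_def] z_B2_2 algebra_simps)
      ultimately have e1: "inI ph F (da 2 * XA 2 (lin (((0, 1), (0, -1)), ((0, 1), (-1, 0)))) + ((da 3 * XA 3 (lin (((0, 1), (0, -1)), ((0, 1), (-1, 0))))) - (db 3 * XB 3 (lin (((0, 1), (0, -1)), ((0, 1), (-1, 0)))))))" by simp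
      have e2: "inI ph F ((da 3 * XA 3 (lin (((0, 1), (0, -1)), ((0, 1), (-1, 0))))) - (db 3 * XB 3 (lin (((0, 1), (0, -1)), ((0, 1), (-1, 0))))))" using sa3 sb3 by (meson inI_add inI_diff inI_mulr)
      show ?thesis using ustep[OF e1 e2 lead_A2] .
    qed
    have sb2: "inI ph F (db 2)"
    proof -
      have "inI ph F (D (lin (((-1, 0), (0, 1)), ((0, -1), (0, 1)))))" using H by (simp add: Wlist_lin del: Xalt.simps)
      moreover have "D (lin (((-1, 0), (0, 1)), ((0, -1), (0, 1)))) = db 2 * (- XB 2 (lin (((-1, 0), (0, 1)), ((0, -1), (0, 1))))) + ((da 3 * XA 3 (lin (((-1, 0), (0, 1)), ((0, -1), (0, 1))))) - (db 3 * XB 3 (lin (((-1, 0), (0, 1)), ((0, -1), (0, 1))))))" by (simp add: D_def z_A1_7 z_A1_7[unfolded One_nat_def] z_A2_7 z_B1_7 z_B1_7[unfolded One_nat_def] algebra_simps)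
      ultimately have e1: "inI ph F (db 2 * (- XB 2 (lin (((-1, 0), (0, 1)), ((0, -1), (0, 1))))) + ((da 3 * XA 3 (lin (((-1, 0), (0, 1)), ((0, -1), (0, 1))))) - (db 3 * XB 3 (lin (((-1, 0), (0, 1)), ((0, -1), (0, 1)))))))" by simp
      have e2: "inI ph F ((da 3 * XA 3 (lin (((-1, 0), (0, 1)), ((0, -1), (0, 1))))) - (db 3 * XB 3 (lin (((-1, 0), (0, 1)), ((0, -1), (0, 1))))))" using sa3 sb3 by (meson inI_add inI_diff inI_mulr)
      show ?thesis using ustep[OF e1 e2 lead_B2] .
    qed
    have sa1: "inI ph F (da 1)"
    proof -
      have "inI ph F (D (lin (((-1, 0), (0, 1)), ((0, 0), (1, 0)))))" using H by (simp add: Wlist_lin del: Xalt.simps)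
      moreover have "D (lin (((-1, 0), (0, 1)), ((0, 0), (1, 0)))) = da 1 * XA 1 (lin (((-1, 0), (0, 1)), ((0, 0), (1, 0)))) + ((da 2 * XA 2 (lin (((-1, 0), (0, 1)), ((0, 0), (1, 0))))) + (da 3 * XA 3 (lin (((-1, 0), (0, 1)), ((0, 0), (1, 0))))) - (db 2 * XB 2 (lin (((-1, 0), (0, 1)), ((0, 0), (1, 0))))) - (db 3 * XB 3 (lin (((-1, 0), (0, 1)), ((0, 0), (1, 0))))))" by (simp add: D_def z_B1_1 z_B1_1[unfolded One_nat_def] algebra_simps)
      ultimately have e1: "inI ph F (da 1 * XA 1 (lin (((-1, 0), (0, 1)), ((0, 0), (1, 0)))) + ((da 2 * XA 2 (lin (((-1, 0), (0, 1)), ((0, 0), (1, 0))))) + (da 3 * XA 3 (lin (((-1, 0), (0, 1)), ((0, 0), (1, 0))))) - (db 2 * XB 2 (lin (((-1, 0), (0, 1)), ((0, 0), (1, 0))))) - (db 3 * XB 3 (lin (((-1, 0), (0, 1)), ((0, 0), (1, 0)))))))" by simp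
      have e2: "inI ph F ((da 2 * XA 2 (lin (((-1, 0), (0, 1)), ((0, 0), (1, 0))))) + (da 3 * XA 3 (lin (((-1, 0), (0, 1)), ((0, 0), (1, 0))))) - (db 2 * XB 2 (lin (((-1, 0), (0, 1)), ((0, 0), (1, 0))))) - (db 3 * XB 3 (lin (((-1, 0), (0, 1)), ((0, 0), (1, 0))))))" using sa2 sa3 sb2 sb3 by (meson inI_add inI_diff inI_mulr)
      show ?thesis using ustep[OF e1 e2 lead_A1] .
    qed
    have sb1: "inI ph F (db 1)"
    proof -
      have "inI ph F (D (lin (((1, 0), (0, 0)), ((0, 1), (-1, 0)))))" using H by (simp add: Wlist_lin del: Xalt.simps)
      moreover have "D (lin (((1, 0), (0, 0)), ((0, 1), (-1, 0)))) = db 1 * (- XB 1 (lin (((1, 0), (0, 0)), ((0, 1), (-1, 0))))) + ((da 2 * XA 2 (lin (((1, 0), (0, 0)), ((0, 1), (-1, 0))))) + (da 3 * XA 3 (lin (((1, 0), (0, 0)), ((0, 1), (-1, 0))))) - (db 2 * XB 2 (lin (((1, 0), (0, 0)), ((0, 1), (-1, 0))))) - (db 3 * XB 3 (lin (((1, 0), (0, 0)), ((0, 1), (-1, 0))))))" by (simp add: D_def z_A1_6 z_A1_6[unfolded One_nat_def] algebra_simps)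
      ultimately have e1: "inI ph F (db 1 * (- XB 1 (lin (((1, 0), (0, 0)), ((0, 1), (-1, 0))))) + ((da 2 * XA 2 (lin (((1, 0), (0, 0)), ((0, 1), (-1, 0))))) + (da 3 * XA 3 (lin (((1, 0), (0, 0)), ((0, 1), (-1, 0))))) - (db 2 * XB 2 (lin (((1, 0), (0, 0)), ((0, 1), (-1, 0))))) - (db 3 * XB 3 (lin (((1, 0), (0, 0)), ((0, 1), (-1, 0)))))))" by simp
      have e2: "inI ph F ((da 2 * XA 2 (lin (((1, 0), (0, 0)), ((0, 1), (-1, 0))))) + (da 3 * XA 3 (lin (((1, 0), (0, 0)), ((0, 1), (-1, 0))))) - (db 2 * XB 2 (lin (((1, 0), (0, 0)), ((0, 1), (-1, 0))))) - (db 3 * XB 3 (lin (((1, 0), (0, 0)), ((0, 1), (-1, 0))))))" using sa2 sa3 sb2 sb3 by (meson inI_add inI_diff inI_mulr)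
      show ?thesis using ustep[OF e1 e2 lead_B1] .
    qed
    have fin: "inI ph F (labs x - labs y)" if "inI ph F (labs y - labs x)" for x y :: "'a qrep"
      using inI_neg[OF that] by simp
    show "qeq ph F (kba 3) (kb0 3) \<and> qeq ph F (kab 2) (ka0 2) \<and> qeq ph F (kba 1) (kb0 1)"
    proof -
      have o1: "qrep_ok (kba 3)" and o2: "qrep_ok (kab 2)" and o3: "qrep_ok (kba 1)" using ok by auto
      have "qeq ph F (kba 3) (kb0 3)" unfolding qeq_iff[OF o1 ok_kb0] using fin sb3 unfolding db_def by blast
      moreover have "qeq ph F (kab 2) (ka0 2)" unfolding qeq_iff[OF o2 ok_ka0] using fin sa2 unfolding da_def by blast
      moreover have "qeq ph F (kba 1) (kb0 1)" unfolding qeq_iff[OF o3 ok_kb0] using fin sb1 unfolding db_def by blast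
      ultimately show ?thesis by blast
    qed
  qed
  note conj2 = this
  have e1: "kb0 3 = qsub (S03_beta yab) (qmul (qy alpha) (qact (sbw 3) (qy alpha)))"
    by (simp add: kb0_def)
  have e2: "ka0 2 = qneg (qmul (qy beta)
            (qsub (qadd (qsub (qsub (qadd (qact (saw 1) yab) (qact (saw 2) yab))
                                    (qact (sbw 2) yab))
                              (qact (sbw 3) yab))
                        (qmul (qy alpha) (qact (sbw 3) (qy alpha))))
                  (qmul (qact (saw 2) (qy alpha)) (qact (saw 3) (qy beta)))))"
    by (simp add: ka0_def)
  have e3: "kb0 1 = qsub (qsub
            (qneg (qmul (qmul (qact (sbw 1) yab) (qact (sbw 3) (qy alpha)))
                        (qsub (qact (sbw 3) (qy beta)) (qy alpha))))
            (qmul (qmul yab (qact (saw 2) (qy alpha)))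
                  (qsub (qact (saw 2) (qy beta)) (qact (saw 3) (qy beta)))))
            (qmul (qmul (qmul (qy alpha) (qact (sbw 1) (qy alpha))) (qact (sbw 2) (qy beta)))
                  (qact (sbw 3) (qy alpha)))"
    by (simp add: kb0_def)
  show ?thesis using conj1 conj2[unfolded e1 e2 e3] by blast
qed


end
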